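(* Let $\mu:[0,1)\to(0,\infty)$ be decreasing and continuous with $\lim_{r\to1^-}\mu(r)=0$, and suppose there is $B>0$ such that $\mu(1-d/2)\ge B\,\mu(1-d)$ for all $d\in(0,1]$. Let $u(z)=\operatorname{Re}\sum_k a_{n_k}z^{n_k}$ be a Hadamard gap series ($n_k$ positive integers, $n_{k+1}\ge\lambda n_k$, $\lambda>1$) converging in $\mathbb{D}$. Then $u\in\mathcal{B}_\mu$ if and only if there is $C$ such that $\sum_{n_k\le N}n_k|a_{n_k}|\le \dfrac{C}{\mu(1-1/N)}$ for all $N\in\mathbb{N}$.
   Context: The Bloch-type space $\mathcal{B}_\mu$ is the set of harmonic functions $u$ on the unit disk $\mathbb{D}$ with $\|u\|_{\mathcal{B}_\mu}=\sup_{z\in\mathbb{D}}\big(|u(0)|+\mu(|z|)\,|\nabla u(z)|\big)<\infty$. *)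

theory Defs
  imports "HOL-Analysis.Analysis"
begin

definition dx :: "(complex \<Rightarrow> real) \<Rightarrow> complex \<Rightarrow> real" where
  "dx u z = deriv (\<lambda>t::real. u (z + of_real t)) 0"

definition dy :: "(complex \<Rightarrow> real) \<Rightarrow> complex \<Rightarrow> real" where
  "dy u z = deriv (\<lambda>t::real. u (z + \<i> * of_real t)) 0"

definition grad_norm :: "(complex \<Rightarrow> real) \<Rightarrow> complex \<Rightarrow> real" where
  "grad_norm u z = sqrt ((dx u z)\<^sup>2 + (dy u z)\<^sup>2)"

definition harmonic_on :: "complex set \<Rightarrow> (complex \<Rightarrow> real) \<Rightarrow> bool" where
  "harmonic_on S u \<longleftrightarrow> open S \<and>
     (\<forall>z\<in>S. u differentiable at z \<and> dx u differentiable at z \<and> dy u differentiable at z) \<and>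
     continuous_on S (dx (dx u)) \<and> continuous_on S (dx (dy u)) \<and>
     continuous_on S (dy (dx u)) \<and> continuous_on S (dy (dy u)) \<and>
     (\<forall>z\<in>S. dx (dx u) z + dy (dy u) z = 0)"

definition bloch_type :: "(real \<Rightarrow> real) \<Rightarrow> (complex \<Rightarrow> real) \<Rightarrow> bool" where
  "bloch_type \<mu> u \<longleftrightarrow> harmonic_on (ball 0 1) u \<and>
     (\<exists>M. \<forall>z\<in>ball 0 1. \<bar>u 0\<bar> + \<mu> (norm z) * grad_norm u z \<le> M)"

end

theory Submission
  imports Defs
begin
lemma line_deriv:
  assumes "(g has_field_derivative g') (at z)"
  shows "((\<lambda>t::real. Re (\<alpha> * g (z + \<beta> * of_real t))) has_real_derivative Re (\<alpha> * \<beta> * g')) (at 0)"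
proof -
  have l: "((\<lambda>t::real. z + \<beta> * of_real t) has_derivative (\<lambda>t. \<beta> * of_real t)) (at 0)"
    by (auto intro!: derivative_eq_intros)
  have gd: "(g has_derivative (\<lambda>x. g' * x)) (at ((\<lambda>t::real. z + \<beta> * of_real t) 0))"
    using assms by (simp add: has_field_derivative_imp_has_derivative)
  have c: "((g \<circ> (\<lambda>t::real. z + \<beta> * of_real t)) has_derivative ((\<lambda>x. g' * x) \<circ> (\<lambda>t. \<beta> * of_real t))) (at 0)"
    by (rule diff_chain_at[OF l gd])
  have bl: "bounded_linear (\<lambda>x. Re (\<alpha> * x))"
    by (rule bounded_linear_compose[OF bounded_linear_Re bounded_linear_mult_right])
  have "((\<lambda>t::real. Re (\<alpha> * (g \<circ> (\<lambda>t. z + \<beta> * of_real t)) t)) has_derivative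
        (\<lambda>t. Re (\<alpha> * ((\<lambda>x. g' * x) \<circ> (\<lambda>t. \<beta> * of_real t)) t))) (at 0)"
    by (rule bounded_linear.has_derivative[OF bl c])
  moreover have E: "(\<lambda>t. Re (\<alpha> * ((\<lambda>x. g' * x) \<circ> (\<lambda>t. \<beta> * of_real t)) t)) = (*) (Re (\<alpha> * \<beta> * g'))"
    by (auto simp: algebra_simps)
  ultimately show ?thesis unfolding has_field_derivative_def by (simp only: o_def)
qed

lemma dir_deriv:
  assumes S: "open S" "z \<in> S" and h: "\<And>w. w \<in> S \<Longrightarrow> h w = Re (\<alpha> * g w)"
    and g: "(g has_field_derivative g') (at z)"
  shows "deriv (\<lambda>t::real. h (z + \<beta> * of_real t)) 0 = Re (\<alpha> * \<beta> * g')"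
proof -
  define T where "T = (\<lambda>t::real. z + \<beta> * of_real t) -` S"
  have oT: "open T" unfolding T_def
    by (rule open_vimage[OF S(1)]) (auto intro!: continuous_intros)
  have T0: "0 \<in> T" using S(2) by (simp add: T_def)
  have "((\<lambda>t::real. h (z + \<beta> * of_real t)) has_real_derivative Re (\<alpha> * \<beta> * g')) (at 0)"
    by (rule has_field_derivative_transform_within_open[OF line_deriv[OF g] oT T0])
       (simp add: T_def h)
  then show ?thesis by (rule DERIV_imp_deriv)
qed

lemma dxdy_Re:
  assumes S: "open S" "z \<in> S" and h: "\<And>w. w \<in> S \<Longrightarrow> h w = Re (\<alpha> * g w)"
    and g: "(g has_field_derivative g') (at z)"
  shows "dx h z = Re (\<alpha> * g')" "dy h z = Re (\<alpha> * \<i> * g')"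
  using dir_deriv[OF S h g, of 1] dir_deriv[OF S h g, of \<i>] unfolding dx_def dy_def by simp_all

lemma Re_differentiable:
  assumes S: "open S" "z \<in> S" and h: "\<And>w. w \<in> S \<Longrightarrow> h w = Re (\<alpha> * g w)"
    and g: "(g has_field_derivative g') (at z)"
  shows "h differentiable at z"
proof -
  have bl: "bounded_linear (\<lambda>x. Re (\<alpha> * x))"
    by (rule bounded_linear_compose[OF bounded_linear_Re bounded_linear_mult_right])
  have "((\<lambda>w. Re (\<alpha> * g w)) has_derivative (\<lambda>x. Re (\<alpha> * (g' * x)))) (at z)"
    using bounded_linear.has_derivative[OF bl has_field_derivative_imp_has_derivative[OF g]] .
  then have "(h has_derivative (\<lambda>x. Re (\<alpha> * (g' * x)))) (at z)"
    by (rule has_derivative_transform_within_open[OF _ S]) (simp add: h)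
  then show ?thesis by (rule differentiableI)
qed

lemma harmonic_Re:
  assumes S: "open S"
    and u: "\<And>w. w \<in> S \<Longrightarrow> u w = Re (g w)"
    and d1: "\<And>w. w \<in> S \<Longrightarrow> (g has_field_derivative g1 w) (at w)"
    and d2: "\<And>w. w \<in> S \<Longrightarrow> (g1 has_field_derivative g2 w) (at w)"
    and d3: "\<And>w. w \<in> S \<Longrightarrow> (g2 has_field_derivative g3 w) (at w)"
  shows "harmonic_on S u" and "\<And>w. w \<in> S \<Longrightarrow> grad_norm u w = norm (g1 w)"
proof -
  have u': "\<And>w. w \<in> S \<Longrightarrow> u w = Re (1 * g w)" using u by simp
  have dxu: "\<And>w. w \<in> S \<Longrightarrow> dx u w = Re (1 * g1 w)" and dyu: "\<And>w. w \<in> S \<Longrightarrow> dy u w = Re (1 * \<i> * g1 w)"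
    using dxdy_Re[OF S _ u' d1] by auto
  have dyu': "\<And>w. w \<in> S \<Longrightarrow> dy u w = Re (\<i> * g1 w)" using dyu by simp
  have dxx: "\<And>w. w \<in> S \<Longrightarrow> dx (dx u) w = Re (1 * g2 w)"
    and dyx: "\<And>w. w \<in> S \<Longrightarrow> dy (dx u) w = Re (1 * \<i> * g2 w)"
    using dxdy_Re[OF S _ dxu d2] by auto
  have dxy: "\<And>w. w \<in> S \<Longrightarrow> dx (dy u) w = Re (\<i> * g2 w)"
    and dyy: "\<And>w. w \<in> S \<Longrightarrow> dy (dy u) w = Re (\<i> * \<i> * g2 w)"
    using dxdy_Re[OF S _ dyu' d2] by auto
  have cg2: "continuous_on S g2"
    using d3 by (intro continuous_at_imp_continuous_on) (blast intro: DERIV_isCont)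
  have cont: "continuous_on S (\<lambda>w. Re (c * g2 w))" for c
    by (intro continuous_intros cg2)
  show "harmonic_on S u"
    unfolding harmonic_on_def
  proof (intro conjI ballI)
    show "open S" by fact
    fix z assume z: "z \<in> S"
    show "u differentiable at z" by (rule Re_differentiable[OF S z u' d1[OF z]])
    show "dx u differentiable at z" by (rule Re_differentiable[OF S z dxu d2[OF z]])
    show "dy u differentiable at z" by (rule Re_differentiable[OF S z dyu' d2[OF z]])
    show "dx (dx u) z + dy (dy u) z = 0" using dxx[OF z] dyy[OF z] by simp
  next
    show "continuous_on S (dx (dx u))" by (rule continuous_on_eq[OF cont[of "1"]]) (simp add: dxx)
    show "continuous_on S (dx (dy u))" by (rule continuous_on_eq[OF cont[of "\<i>"]]) (simp add: dxy)
    show "continuous_on S (dy (dx u))" by (rule continuous_on_eq[OF cont[of "1 * \<i>"]]) (simp add: dyx)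
    show "continuous_on S (dy (dy u))" by (rule continuous_on_eq[OF cont[of "\<i> * \<i>"]]) (simp add: dyy)
  qed
  fix w assume w: "w \<in> S"
  show "grad_norm u w = norm (g1 w)"
    unfolding grad_norm_def dxu[OF w] dyu'[OF w] by (simp add: cmod_def)
qed

definition gcoef :: "(nat \<Rightarrow> nat) \<Rightarrow> (nat \<Rightarrow> complex) \<Rightarrow> nat \<Rightarrow> complex" where
  "gcoef n a m = (if m \<in> range n then a (inv n m) else 0)"

lemma gcoef_n: "inj n \<Longrightarrow> gcoef n a (n k) = a k"
  by (simp add: gcoef_def)

lemma gap_powser:
  assumes sm: "strict_mono n" and conv: "\<And>z. norm z < 1 \<Longrightarrow> summable (\<lambda>k. a k * z ^ n k)"
    and z: "norm z < 1"
  shows "(\<lambda>m. gcoef n a m * z ^ m) sums (\<Sum>k. a k * z ^ n k)"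
proof -
  have inj: "inj n" using sm strict_mono_imp_inj_on by blast
  have "(\<lambda>k. gcoef n a (n k) * z ^ n k) sums (\<Sum>k. a k * z ^ n k) \<longleftrightarrow>
        (\<lambda>m. gcoef n a m * z ^ m) sums (\<Sum>k. a k * z ^ n k)"
    by (rule sums_mono_reindex[OF sm]) (simp add: gcoef_def)
  moreover have "(\<lambda>k. gcoef n a (n k) * z ^ n k) sums (\<Sum>k. a k * z ^ n k)"
    using conv[OF z] by (simp add: gcoef_n[OF inj] summable_sums)
  ultimately show ?thesis by simp
qed

lemma diffs_gap_powser:
  assumes sm: "strict_mono n" and pos: "\<And>k. n k > 0"
  shows "(\<lambda>k. of_nat (n k) * a k * z ^ (n k - 1)) sums s \<longleftrightarrow> (\<lambda>m. diffs (gcoef n a) m * z ^ m) sums s"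
proof -
  have inj: "inj n" using sm strict_mono_imp_inj_on by blast
  have sm': "strict_mono (\<lambda>k. n k - 1)"
    unfolding strict_mono_def
  proof (intro allI impI)
    fix x y :: nat assume "x < y"
    then have "n x < n y" using sm by (simp add: strict_mono_less)
    then show "n x - 1 < n y - 1" using pos[of x] by linarith
  qed
  have e: "diffs (gcoef n a) (n k - 1) * z ^ (n k - 1) = of_nat (n k) * a k * z ^ (n k - 1)" for k
    using pos[of k] by (simp add: diffs_def gcoef_n[OF inj])
  have zr: "diffs (gcoef n a) m * z ^ m = 0" if "m \<notin> range (\<lambda>k. n k - 1)" for m
  proof -
    have "Suc m \<notin> range n"
    proof
      assume "Suc m \<in> range n" then obtain k where "n k = Suc m" by auto
      then have "m = n k - 1" by simp
      with that show False by auto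
    qed
    then show ?thesis by (simp add: diffs_def gcoef_def)
  qed
  have fe: "(\<lambda>k. of_nat (n k) * a k * z ^ (n k - 1)) = (\<lambda>k. diffs (gcoef n a) (n k - 1) * z ^ (n k - 1))"
    using e by (intro ext) (simp only:)
  show ?thesis unfolding fe
    by (rule sums_mono_reindex[where f="\<lambda>m. diffs (gcoef n a) m * z ^ m", OF sm' zr])
qed

lemma diffs_gap_norm:
  assumes sm: "strict_mono n" and pos: "\<And>k. n k > 0"
  shows "(\<lambda>k. norm (of_nat (n k) * a k * z ^ (n k - 1))) sums s \<longleftrightarrow> (\<lambda>m. norm (diffs (gcoef n a) m * z ^ m)) sums s"
proof -
  have inj: "inj n" using sm strict_mono_imp_inj_on by blast
  have sm': "strict_mono (\<lambda>k. n k - 1)"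
    unfolding strict_mono_def
  proof (intro allI impI)
    fix x y :: nat assume "x < y"
    then have "n x < n y" using sm by (simp add: strict_mono_less)
    then show "n x - 1 < n y - 1" using pos[of x] by linarith
  qed
  have e: "norm (diffs (gcoef n a) (n k - 1) * z ^ (n k - 1)) = norm (of_nat (n k) * a k * z ^ (n k - 1))" for k
    using pos[of k] by (simp add: diffs_def gcoef_n[OF inj])
  have zr: "norm (diffs (gcoef n a) m * z ^ m) = 0" if "m \<notin> range (\<lambda>k. n k - 1)" for m
  proof -
    have "Suc m \<notin> range n"
    proof
      assume "Suc m \<in> range n" then obtain k where "n k = Suc m" by auto
      then have "m = n k - 1" by simp
      with that show False by auto
    qed
    then show ?thesis by (simp add: diffs_def gcoef_def)
  qed
  have fe: "(\<lambda>k. norm (of_nat (n k) * a k * z ^ (n k - 1))) = (\<lambda>k. norm (diffs (gcoef n a) (n k - 1) * z ^ (n k - 1)))"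
    using e by (intro ext) (simp only:)
  show ?thesis unfolding fe
    by (rule sums_mono_reindex[where f="\<lambda>m. norm (diffs (gcoef n a) m * z ^ m)", OF sm' zr])
qed

definition ex :: "nat \<Rightarrow> int \<Rightarrow> nat \<Rightarrow> complex" where
  "ex M k s = exp (2 * of_real pi * \<i> * of_int k * of_nat s / of_nat M)"

lemma ex_add: "ex M (k1 + k2) s = ex M k1 s * ex M k2 s"
  unfolding ex_def by (simp add: exp_add[symmetric] algebra_simps add_divide_distrib)

lemma ex_cnj: "cnj (ex M k s) = ex M (-k) s"
  unfolding ex_def by (simp add: exp_cnj)

lemma norm_ex: "norm (ex M k s) = 1"
  unfolding ex_def by (simp add: norm_exp_eq_Re)

lemma ex_zero[simp]: "ex M 0 s = 1"
  unfolding ex_def by simp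

lemma ex_sum:
  assumes M: "M > 0" and k: "\<bar>k\<bar> < int M"
  shows "(\<Sum>s<M. ex M k s) = (if k = 0 then of_nat M else 0)"
proof (cases "k = 0")
  case True then show ?thesis by simp
next
  case False
  define w where "w = exp (2 * of_real pi * \<i> * of_int k / of_nat M)"
  have pw: "ex M k s = w ^ s" for s
    unfolding ex_def w_def by (simp add: exp_of_nat_mult[symmetric] algebra_simps)
  have w1: "w \<noteq> 1"
  proof
    assume "w = 1"
    then obtain j :: int where j: "2 * pi * of_int k / of_nat M = of_int (2 * j) * pi"
      unfolding w_def exp_eq_1 by auto
    then have "of_int k = (of_int (j * int M) :: real)" using M by (simp add: field_simps)
    then have "k = j * int M" by linarith
    with False k show False
      by (metis abs_mult abs_of_nat mult_le_cancel_right1 not_le of_nat_0_less_iff M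
          mult_eq_0_iff zero_less_abs_iff abs_ge_zero int_one_le_iff_zero_less abs_mult_pos)
  qed
  have wM: "w ^ M = 1"
  proof -
    have "w ^ M = exp (of_nat M * (2 * of_real pi * \<i> * of_int k / of_nat M))"
      unfolding w_def by (simp only: exp_of_nat_mult[symmetric])
    also have "\<dots> = exp (2 * of_real pi * \<i> * of_int k)" using M by simp
    also have "\<dots> = 1" by (simp add: exp_eq_1)
    finally show ?thesis .
  qed
  show ?thesis using False by (simp add: pw geometric_sum[OF w1] wM)
qed

definition RP :: "nat \<Rightarrow> (nat \<Rightarrow> int) \<Rightarrow> (nat \<Rightarrow> complex) \<Rightarrow> nat set \<Rightarrow> nat \<Rightarrow> complex" where
  "RP M \<nu> \<sigma> I s = (\<Prod>i\<in>I. 1 + (\<sigma> i * ex M (\<nu> i) s + cnj (\<sigma> i) * ex M (- \<nu> i) s) / 2)"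

definition AA :: "nat \<Rightarrow> (nat \<Rightarrow> int) \<Rightarrow> (nat \<Rightarrow> complex) \<Rightarrow> nat set \<Rightarrow> int \<Rightarrow> complex" where
  "AA M \<nu> \<sigma> I k = (\<Sum>s<M. ex M k s * RP M \<nu> \<sigma> I s)"

definition spec :: "(nat \<Rightarrow> int) \<Rightarrow> nat set \<Rightarrow> int set" where
  "spec \<nu> I = {k. \<exists>\<epsilon>. (\<forall>i. \<epsilon> i \<in> {-1,0,1}) \<and> k = (\<Sum>i\<in>I. \<epsilon> i * \<nu> i)}"

lemma AA_empty: "AA M \<nu> \<sigma> {} k = (\<Sum>s<M. ex M k s)"
  by (simp add: AA_def RP_def)

lemma AA_insert:
  assumes "finite I" "i0 \<notin> I"
  shows "AA M \<nu> \<sigma> (insert i0 I) k = AA M \<nu> \<sigma> I k + \<sigma> i0 / 2 * AA M \<nu> \<sigma> I (k + \<nu> i0)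
          + cnj (\<sigma> i0) / 2 * AA M \<nu> \<sigma> I (k - \<nu> i0)"
proof -
  have "ex M k s * RP M \<nu> \<sigma> (insert i0 I) s = ex M k s * RP M \<nu> \<sigma> I s
      + \<sigma> i0 / 2 * (ex M (k + \<nu> i0) s * RP M \<nu> \<sigma> I s)
      + cnj (\<sigma> i0) / 2 * (ex M (k - \<nu> i0) s * RP M \<nu> \<sigma> I s)" for s
    using assms unfolding RP_def
    by (simp add: ex_add[of M k "\<nu> i0"] ex_add[of M k "- \<nu> i0", simplified] algebra_simps add_divide_distrib)
  then show ?thesis unfolding AA_def by (simp add: sum.distrib sum_distrib_left)
qed

lemma spec_bound:
  assumes "\<And>i. \<nu> i \<ge> 0" "k \<in> spec \<nu> I"
  shows "\<bar>k\<bar> \<le> (\<Sum>i\<in>I. \<nu> i)"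
proof -
  obtain \<epsilon> where e: "\<forall>i. \<epsilon> i \<in> {-1,0,1}" "k = (\<Sum>i\<in>I. \<epsilon> i * \<nu> i)"
    using assms(2) unfolding spec_def by blast
  have "\<bar>k\<bar> \<le> (\<Sum>i\<in>I. \<bar>\<epsilon> i * \<nu> i\<bar>)" using e(2) sum_abs by blast
  also have "\<dots> \<le> (\<Sum>i\<in>I. \<nu> i)"
  proof (rule sum_mono)
    fix i have "\<epsilon> i \<in> {-1,0,1}" using e(1) by blast
    then show "\<bar>\<epsilon> i * \<nu> i\<bar> \<le> \<nu> i" using assms(1)[of i] by (auto simp: abs_mult)
  qed
  finally show ?thesis .
qed

lemma spec_insert_gen:
  assumes "finite I" "i0 \<notin> I" "k + c * \<nu> i0 \<in> spec \<nu> I" "c \<in> {-1,0,1}"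
  shows "k \<in> spec \<nu> (insert i0 I)"
proof -
  obtain \<epsilon> where e1: "\<forall>i. \<epsilon> i \<in> {-1,0,1}" and e2: "k + c * \<nu> i0 = (\<Sum>i\<in>I. \<epsilon> i * \<nu> i)"
    using assms(3) unfolding spec_def by blast
  define \<epsilon>' where "\<epsilon>' = \<epsilon>(i0 := - c)"
  have s1: "(\<Sum>i\<in>I. \<epsilon>' i * \<nu> i) = (\<Sum>i\<in>I. \<epsilon> i * \<nu> i)"
    using assms(2) unfolding \<epsilon>'_def by (intro sum.cong) auto
  have s2: "(\<Sum>i\<in>insert i0 I. \<epsilon>' i * \<nu> i) = \<epsilon>' i0 * \<nu> i0 + (\<Sum>i\<in>I. \<epsilon>' i * \<nu> i)"
    using assms(1,2) by (rule sum.insert)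
  have s3: "\<epsilon>' i0 = - c" by (simp add: \<epsilon>'_def)
  have "k = (\<Sum>i\<in>insert i0 I. \<epsilon>' i * \<nu> i)"
    unfolding s2 s3 s1 e2[symmetric] by simp
  moreover have "\<forall>i. \<epsilon>' i \<in> {-1,0,1}" using e1 assms(4) by (auto simp: \<epsilon>'_def)
  ultimately show ?thesis unfolding spec_def by blast
qed

lemma spec_insert:
  assumes "finite I" "i0 \<notin> I"
  shows "k \<in> spec \<nu> I \<Longrightarrow> k \<in> spec \<nu> (insert i0 I)"
    and "k + \<nu> i0 \<in> spec \<nu> I \<Longrightarrow> k \<in> spec \<nu> (insert i0 I)"
    and "k - \<nu> i0 \<in> spec \<nu> I \<Longrightarrow> k \<in> spec \<nu> (insert i0 I)"
  using spec_insert_gen[OF assms, of k 0 \<nu>] spec_insert_gen[OF assms, of k 1 \<nu>]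
    spec_insert_gen[OF assms, of k "-1" \<nu>] by auto

lemma lac_sum_below:
  fixes Q :: real
  assumes pos: "\<And>i. \<nu> i > 0" and Q: "Q > 1" and lac: "\<And>i. real_of_int (\<nu> (Suc i)) \<ge> Q * \<nu> i"
  shows "(\<Sum>i<i0. real_of_int (\<nu> i)) \<le> \<nu> i0 / (Q - 1)"
proof (induction i0)
  case 0 then show ?case using pos[of 0] Q by simp
next
  case (Suc i0)
  have "(\<Sum>i<Suc i0. real_of_int (\<nu> i)) \<le> \<nu> i0 / (Q - 1) + \<nu> i0" using Suc by simp
  also have "\<dots> = Q * \<nu> i0 / (Q - 1)" using Q by (simp add: field_simps)
  also have "\<dots> \<le> \<nu> (Suc i0) / (Q - 1)" using lac[of i0] Q by (simp add: divide_right_mono)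
  finally show ?case .
qed

lemma AA_main:
  fixes Q :: real
  assumes pos: "\<And>i. \<nu> i > 0" and Q: "Q > 3" and lac: "\<And>i. real_of_int (\<nu> (Suc i)) \<ge> Q * real_of_int (\<nu> i)"
    and M: "M > 0" and fin: "finite I"
  shows "\<forall>k. \<bar>k\<bar> + (\<Sum>i\<in>I. \<nu> i) < int M \<longrightarrow>
     (k \<notin> spec \<nu> I \<longrightarrow> AA M \<nu> \<sigma> I k = 0) \<and> (k = 0 \<longrightarrow> AA M \<nu> \<sigma> I k = of_nat M)
     \<and> (\<forall>i\<in>I. k = \<nu> i \<longrightarrow> AA M \<nu> \<sigma> I k = of_nat M * cnj (\<sigma> i) / 2)"
  using fin
proof (induction I rule: finite_linorder_max_induct)
  case empty
  show ?case
  proof (rule allI, rule impI)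
    fix k :: int assume k: "\<bar>k\<bar> + (\<Sum>i\<in>{}. \<nu> i) < int M"
    have z: "0 \<in> spec \<nu> {}" unfolding spec_def by auto
    have "k \<notin> spec \<nu> {} \<longrightarrow> AA M \<nu> \<sigma> {} k = 0"
      using k z M by (auto simp: AA_empty ex_sum)
    moreover have "k = 0 \<longrightarrow> AA M \<nu> \<sigma> {} k = of_nat M" using M by (simp add: AA_empty)
    ultimately show "(k \<notin> spec \<nu> {} \<longrightarrow> AA M \<nu> \<sigma> {} k = 0) \<and> (k = 0 \<longrightarrow> AA M \<nu> \<sigma> {} k = of_nat M)
     \<and> (\<forall>i\<in>{}. k = \<nu> i \<longrightarrow> AA M \<nu> \<sigma> {} k = of_nat M * cnj (\<sigma> i) / 2)" by simp
  qed
next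
  case (insert i0 I)
  have i0I: "i0 \<notin> I" using insert by auto
  have sumI: "real_of_int (\<Sum>i\<in>I. \<nu> i) \<le> \<nu> i0 / (Q - 1)"
  proof -
    have "real_of_int (\<Sum>i\<in>I. \<nu> i) = (\<Sum>i\<in>I. real_of_int (\<nu> i))" by simp
    also have "\<dots> \<le> (\<Sum>i<i0. real_of_int (\<nu> i))"
      using insert(2) pos by (intro sum_mono2) (auto simp: less_imp_le)
    also have "\<dots> \<le> \<nu> i0 / (Q - 1)" using lac_sum_below[of \<nu> Q i0, OF pos _ lac] Q by simp
    finally show ?thesis .
  qed
  have half: "2 * (\<Sum>i\<in>I. \<nu> i) < \<nu> i0"
  proof -
    have h2: "2 * (\<nu> i0 / (Q - 1)) < real_of_int (\<nu> i0)" using Q pos[of i0] by (simp add: field_simps)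
    have e: "real_of_int (2 * (\<Sum>i\<in>I. \<nu> i)) = 2 * real_of_int (\<Sum>i\<in>I. \<nu> i)" by simp
    have "real_of_int (2 * (\<Sum>i\<in>I. \<nu> i)) < \<nu> i0" unfolding e using sumI h2 by linarith
    then show ?thesis by linarith
  qed
  have nonneg: "\<And>i. \<nu> i \<ge> 0" using pos less_imp_le by blast
  have sI0: "(\<Sum>i\<in>I. \<nu> i) \<ge> 0" using nonneg by (simp add: sum_nonneg)
  have notin: "x \<notin> spec \<nu> I" if "\<bar>x\<bar> > (\<Sum>i\<in>I. \<nu> i)" for x
    using spec_bound[OF nonneg] that by force
  have sins: "(\<Sum>i\<in>insert i0 I. \<nu> i) = \<nu> i0 + (\<Sum>i\<in>I. \<nu> i)" using insert(1) i0I by simp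
  show ?case
  proof (rule allI, rule impI)
    fix k :: int assume k: "\<bar>k\<bar> + (\<Sum>i\<in>insert i0 I. \<nu> i) < int M"
    have kp: "\<bar>k + \<nu> i0\<bar> + (\<Sum>i\<in>I. \<nu> i) < int M" and km: "\<bar>k - \<nu> i0\<bar> + (\<Sum>i\<in>I. \<nu> i) < int M"
      and k0: "\<bar>k\<bar> + (\<Sum>i\<in>I. \<nu> i) < int M"
      using k sins pos[of i0] by auto
    note IH = insert(3)[rule_format]
    note AI = AA_insert[OF insert(1) i0I, of M \<nu> \<sigma> k]
    have A1: "k \<notin> spec \<nu> (insert i0 I) \<longrightarrow> AA M \<nu> \<sigma> (insert i0 I) k = 0"
    proof
      assume ks: "k \<notin> spec \<nu> (insert i0 I)"
      then have "k \<notin> spec \<nu> I" "k + \<nu> i0 \<notin> spec \<nu> I" "k - \<nu> i0 \<notin> spec \<nu> I"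
        using spec_insert[OF insert(1) i0I] by blast+
      then show "AA M \<nu> \<sigma> (insert i0 I) k = 0"
        using IH[OF k0] IH[OF kp] IH[OF km] AI by simp
    qed
    have A2: "k = 0 \<longrightarrow> AA M \<nu> \<sigma> (insert i0 I) k = of_nat M"
    proof
      assume k0': "k = 0"
      have "\<nu> i0 \<notin> spec \<nu> I" "- \<nu> i0 \<notin> spec \<nu> I" using notin half sI0 by auto
      then show "AA M \<nu> \<sigma> (insert i0 I) k = of_nat M"
        using IH[OF k0] IH[OF kp] IH[OF km] AI k0' by simp
    qed
    have A3: "\<forall>i\<in>insert i0 I. k = \<nu> i \<longrightarrow> AA M \<nu> \<sigma> (insert i0 I) k = of_nat M * cnj (\<sigma> i) / 2"
    proof (intro ballI impI)
      fix i assume i: "i \<in> insert i0 I" and ki: "k = \<nu> i"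
      show "AA M \<nu> \<sigma> (insert i0 I) k = of_nat M * cnj (\<sigma> i) / 2"
      proof (cases "i = i0")
        case True
        have "k \<notin> spec \<nu> I" "k + \<nu> i0 \<notin> spec \<nu> I" using notin half sI0 ki True by auto
        moreover have "AA M \<nu> \<sigma> I (k - \<nu> i0) = of_nat M" using IH[OF km] ki True by simp
        ultimately show ?thesis using IH[OF k0] IH[OF kp] AI True by simp
      next
        case False
        with i have iI: "i \<in> I" by simp
        have le: "\<nu> i \<le> (\<Sum>i\<in>I. \<nu> i)" using iI insert(1) nonneg by (intro member_le_sum) auto
        have "k + \<nu> i0 \<notin> spec \<nu> I" "k - \<nu> i0 \<notin> spec \<nu> I" using notin half le ki nonneg[of i] by auto
        then show ?thesis using IH[OF k0] IH[OF kp] IH[OF km] AI ki iI by simp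
      qed
    qed
    show "(k \<notin> spec \<nu> (insert i0 I) \<longrightarrow> AA M \<nu> \<sigma> (insert i0 I) k = 0) \<and> (k = 0 \<longrightarrow> AA M \<nu> \<sigma> (insert i0 I) k = of_nat M)
     \<and> (\<forall>i\<in>insert i0 I. k = \<nu> i \<longrightarrow> AA M \<nu> \<sigma> (insert i0 I) k = of_nat M * cnj (\<sigma> i) / 2)"
      using A1 A2 A3 by blast
  qed
qed

lemma lac_pow:
  assumes gap: "\<And>k. real (n (Suc k)) \<ge> lam * real (n k)" and lam: "lam > 1"
  shows "real (n (a + d)) \<ge> lam ^ d * real (n a)"
proof (induction d)
  case 0 then show ?case by simp
next
  case (Suc d)
  have "lam ^ Suc d * real (n a) = lam * (lam ^ d * real (n a))" by simp
  also have "\<dots> \<le> lam * real (n (a + d))" using Suc lam by (intro mult_left_mono) auto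
  also have "\<dots> \<le> real (n (a + Suc d))" using gap[of "a + d"] by simp
  finally show ?case .
qed

lemma lac_lt:
  assumes gap: "\<And>k. real (n (Suc k)) \<ge> lam * real (n k)" and lam: "lam > 1"
    and pos: "\<And>k. n k > 0" and "l < l'"
  shows "real (n l') \<ge> lam * real (n l)"
proof -
  obtain d where d: "l' = Suc (l + d)" using \<open>l < l'\<close> less_iff_Suc_add by auto
  have "lam ^ d \<ge> 1" using lam by simp
  then have "real (n (Suc l)) \<le> lam ^ d * real (n (Suc l))" using pos[of "Suc l"]
    by (simp add: mult_le_cancel_right1)
  also have "\<dots> \<le> real (n l')" using lac_pow[where n=n and lam=lam and a="Suc l" and d=d, OF gap lam] d by simp
  finally show ?thesis using gap[of l] by simp
qed
lemma lac_class:
  assumes gap: "\<And>k. real (n (Suc k)) \<ge> lam * real (n k)" and lam: "lam > 1"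
    and pos: "\<And>k. n k > 0"
    and Qbig: "lam ^ m > 3 + 1 / (lam - 1)"
    and fin: "finite I"
    and sp: "int (n l) \<in> spec (\<lambda>i. int (n (j + m * i))) I"
  shows "\<exists>i\<in>I. l = j + m * i"
proof -
  define \<nu> where "\<nu> = (\<lambda>i. int (n (j + m * i)))"
  define Q where "Q = lam ^ m"
  have Q3: "Q > 3"
  proof -
    have "1 / (lam - 1) > 0" using lam by simp
    then show ?thesis using Qbig unfolding Q_def by linarith
  qed
  have \<nu>pos: "\<And>i. \<nu> i > 0" using pos by (simp add: \<nu>_def)
  have \<nu>lac: "real_of_int (\<nu> (Suc i)) \<ge> Q * real_of_int (\<nu> i)" for i
  proof -
    have "real (n ((j + m * i) + m)) \<ge> lam ^ m * real (n (j + m * i))" by (rule lac_pow[where n=n and lam=lam, OF gap lam])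
    moreover have "n (j + m * Suc i) = n ((j + m * i) + m)" by (simp add: algebra_simps)
    ultimately show ?thesis by (simp only: \<nu>_def Q_def of_int_of_nat_eq)
  qed
  obtain \<epsilon> where e1: "\<forall>i. \<epsilon> i \<in> {-1,0,1}" and e2: "int (n l) = (\<Sum>i\<in>I. \<epsilon> i * \<nu> i)"
    using sp unfolding spec_def \<nu>_def by blast
  define J where "J = {i\<in>I. \<epsilon> i \<noteq> 0}"
  have finJ: "finite J" using fin by (simp add: J_def)
  have sJ: "(\<Sum>i\<in>I. \<epsilon> i * \<nu> i) = (\<Sum>i\<in>J. \<epsilon> i * \<nu> i)"
    unfolding J_def using fin by (intro sum.mono_neutral_right) auto
  have Jne: "J \<noteq> {}" using e2 sJ pos[of l] by auto
  define i0 where "i0 = Max J"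
  have i0J: "i0 \<in> J" using finJ Jne by (simp add: i0_def)
  have belowJ: "\<And>i. i \<in> J - {i0} \<Longrightarrow> i < i0"
    using Max_ge[OF finJ] unfolding i0_def by fastforce
  define R where "R = (\<Sum>i\<in>J - {i0}. \<epsilon> i * \<nu> i)"
  have split: "(\<Sum>i\<in>J. \<epsilon> i * \<nu> i) = \<epsilon> i0 * \<nu> i0 + R"
    unfolding R_def using finJ i0J by (simp add: sum.remove)
  have Rb: "real_of_int \<bar>R\<bar> \<le> \<nu> i0 / (Q - 1)"
  proof -
    have "\<bar>R\<bar> \<le> (\<Sum>i\<in>J - {i0}. \<bar>\<epsilon> i * \<nu> i\<bar>)" unfolding R_def by (rule sum_abs)
    also have "\<dots> \<le> (\<Sum>i\<in>J - {i0}. \<nu> i)"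
    proof (rule sum_mono)
      fix i have "\<epsilon> i \<in> {-1,0,1}" using e1 by blast
      then show "\<bar>\<epsilon> i * \<nu> i\<bar> \<le> \<nu> i" using \<nu>pos[of i] by (auto simp: abs_mult)
    qed
    finally have "real_of_int \<bar>R\<bar> \<le> real_of_int (\<Sum>i\<in>J - {i0}. \<nu> i)" by linarith
    then have "real_of_int \<bar>R\<bar> \<le> (\<Sum>i\<in>J - {i0}. real_of_int (\<nu> i))" by simp
    also have "\<dots> \<le> (\<Sum>i<i0. real_of_int (\<nu> i))"
      using belowJ \<nu>pos by (intro sum_mono2) (auto simp: less_imp_le)
    also have "\<dots> \<le> \<nu> i0 / (Q - 1)"
      using lac_sum_below[of \<nu> Q i0, OF \<nu>pos _ \<nu>lac] Q3 by simp
    finally show ?thesis .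
  qed
  define \<delta> where "\<delta> = 1 / (Q - 1)"
  have d1: "\<delta> < lam - 1" and d2: "\<delta> < 1 - 1 / lam"
  proof -
    have "Q - 1 > 1 + 1 / (lam - 1)" using Qbig unfolding Q_def by simp
    have A: "1 / (Q - 1) < 1 / (1 + 1 / (lam - 1))"
    proof (rule divide_strict_left_mono)
      have p: "1 / (lam - 1) > 0" using lam by simp
      show "1 + 1 / (lam - 1) < Q - 1" by fact
      show "0 < (Q - 1) * (1 + 1 / (lam - 1))" using p \<open>Q - 1 > 1 + 1 / (lam - 1)\<close> by (intro mult_pos_pos) linarith+
    qed simp
    have B: "1 / (1 + 1 / (lam - 1)) = 1 - 1 / lam" using lam by (simp add: field_simps)
    have C: "1 - 1 / lam < lam - 1"
    proof -
      have "1 * (lam - 1) < lam * (lam - 1)" using lam by (intro mult_strict_right_mono) auto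
      then show ?thesis using lam by (simp add: field_simps)
    qed
    show "\<delta> < lam - 1" using A B C unfolding \<delta>_def by linarith
    show "\<delta> < 1 - 1 / lam" using A B unfolding \<delta>_def by linarith
  qed
  have dpos: "\<delta> \<ge> 0" using Q3 by (simp add: \<delta>_def)
  define K where "K = j + m * i0"
  have \<nu>K: "\<nu> i0 = int (n K)" by (simp add: \<nu>_def K_def)
  have eqi: "int (n l) = \<epsilon> i0 * int (n K) + R" using e2 sJ split \<nu>K by simp
  have eq: "real (n l) = real_of_int (\<epsilon> i0) * real (n K) + real_of_int R"
  proof -
    have "real_of_int (int (n l)) = real_of_int (\<epsilon> i0 * int (n K) + R)" using eqi by simp
    then show ?thesis by simp
  qed
  have Rb': "\<bar>real_of_int R\<bar> \<le> \<delta> * real (n K)" using Rb \<nu>K by (simp add: \<delta>_def)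
  have nK: "real (n K) > 0" using pos[of K] by simp
  have ei0: "\<epsilon> i0 = 1"
  proof -
    have "\<epsilon> i0 \<in> {-1,1}" using e1 i0J unfolding J_def by auto
    moreover have "\<epsilon> i0 \<noteq> -1"
    proof
      assume "\<epsilon> i0 = -1"
      then have "real (n l) \<le> - real (n K) + \<delta> * real (n K)" using eq Rb' by simp
      moreover have "\<delta> * real (n K) < 1 * real (n K)"
      proof (rule mult_strict_right_mono)
        have "1 / lam > 0" using lam by simp
        then show "\<delta> < 1" using d2 by linarith
      qed (use nK in auto)
      ultimately show False using pos[of l] by simp
    qed
    ultimately show ?thesis by auto
  qed
  have lo: "real (n l) \<ge> (1 - \<delta>) * real (n K)" and hi: "real (n l) \<le> (1 + \<delta>) * real (n K)"
    using eq Rb' ei0 by (auto simp: algebra_simps)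
  have "l = K"
  proof (rule ccontr)
    assume "l \<noteq> K"
    then consider "l > K" | "l < K" by linarith
    then show False
    proof cases
      case 1
      have "real (n l) \<ge> lam * real (n K)" using lac_lt[where n=n and lam=lam, OF gap lam pos 1] .
      moreover have "(1 + \<delta>) * real (n K) < lam * real (n K)" using d1 nK by simp
      ultimately show False using hi by simp
    next
      case 2
      have "real (n K) \<ge> lam * real (n l)" using lac_lt[where n=n and lam=lam, OF gap lam pos 2] .
      then have "real (n l) \<le> real (n K) / lam" using lam by (simp add: field_simps)
      moreover have "(1 / lam) * real (n K) < (1 - \<delta>) * real (n K)"
        using d2 nK by (intro mult_strict_right_mono) auto
      moreover have "real (n K) / lam = (1 / lam) * real (n K)" by simp
      ultimately show False using lo by linarith
    qed
  qed
  then show ?thesis using i0J unfolding J_def K_def by auto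
qed

lemma cnj_sgn_mult: "b * cnj (if b = 0 then 1 else sgn b) = complex_of_real (norm b)"
proof (cases "b = 0")
  case True then show ?thesis by simp
next
  case False
  have "b * cnj (sgn b) = b * cnj b / complex_of_real (norm b)"
    by (simp add: sgn_div_norm scaleR_conv_of_real divide_inverse complex_cnj_divide)
  also have "\<dots> = complex_of_real (norm b)" using False
    by (simp add: complex_norm_square[symmetric] power2_eq_square)
  finally show ?thesis using False by simp
qed

lemma RP_real:
  assumes "\<And>i. norm (\<sigma> i) = 1"
  shows "RP M \<nu> \<sigma> I s = complex_of_real (\<Prod>i\<in>I. 1 + Re (\<sigma> i * ex M (\<nu> i) s))"
    and "(\<Prod>i\<in>I. 1 + Re (\<sigma> i * ex M (\<nu> i) s)) \<ge> 0"
proof -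
  have "(\<sigma> i * ex M (\<nu> i) s + cnj (\<sigma> i) * ex M (- \<nu> i) s) / 2
        = complex_of_real (Re (\<sigma> i * ex M (\<nu> i) s))" for i
  proof -
    define w where "w = \<sigma> i * ex M (\<nu> i) s"
    have cw: "cnj w = cnj (\<sigma> i) * ex M (- \<nu> i) s" unfolding w_def complex_cnj_mult ex_cnj ..
    have "\<sigma> i * ex M (\<nu> i) s + cnj (\<sigma> i) * ex M (- \<nu> i) s = w + cnj w" unfolding cw by (simp only: w_def)
    also have "\<dots> = complex_of_real (2 * Re w)" by (rule complex_add_cnj)
    finally show ?thesis unfolding w_def by simp
  qed
  then have "1 + (\<sigma> i * ex M (\<nu> i) s + cnj (\<sigma> i) * ex M (- \<nu> i) s) / 2
        = complex_of_real (1 + Re (\<sigma> i * ex M (\<nu> i) s))" for i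
    by (simp only: of_real_add of_real_1)
  then show "RP M \<nu> \<sigma> I s = complex_of_real (\<Prod>i\<in>I. 1 + Re (\<sigma> i * ex M (\<nu> i) s))"
    unfolding RP_def of_real_prod by (intro prod.cong) auto
  show "(\<Prod>i\<in>I. 1 + Re (\<sigma> i * ex M (\<nu> i) s)) \<ge> 0"
  proof (rule prod_nonneg)
    fix i
    have "\<bar>Re (\<sigma> i * ex M (\<nu> i) s)\<bar> \<le> norm (\<sigma> i * ex M (\<nu> i) s)" by (rule abs_Re_le_cmod)
    also have "\<dots> = 1" using assms by (simp add: norm_mult norm_ex)
    finally show "0 \<le> 1 + Re (\<sigma> i * ex M (\<nu> i) s)" by linarith
  qed
qed

lemma sidon_class:
  fixes b :: "nat \<Rightarrow> complex"
  assumes gap: "\<And>k. real (n (Suc k)) \<ge> lam * real (n k)" and lam: "lam > 1"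
    and pos: "\<And>k. n k > 0"
    and Qbig: "lam ^ m > 3 + 1 / (lam - 1)" and jm: "j < m"
    and G: "finite G"
  shows "\<exists>t::real. (\<Sum>l\<in>{l\<in>G. l mod m = j}. norm (b l))
            \<le> 2 * norm (\<Sum>l\<in>G. b l * exp (\<i> * of_real t) ^ n l)"
proof -
  have m0: "m > 0" using jm by simp
  define K where "K = (\<lambda>i. j + m * i)"
  have injK: "inj K" unfolding K_def inj_def using m0 by simp
  define I where "I = K -` G"
  have finI: "finite I" unfolding I_def using G injK by (rule finite_vimageI)
  define \<nu> where "\<nu> = (\<lambda>i. int (n (j + m * i)))"
  define Q where "Q = lam ^ m"
  have Q3: "Q > 3"
  proof -
    have "1 / (lam - 1) > 0" using lam by simp
    then show ?thesis using Qbig unfolding Q_def by linarith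
  qed
  have \<nu>pos: "\<And>i. \<nu> i > 0" using pos by (simp add: \<nu>_def)
  have \<nu>lac: "real_of_int (\<nu> (Suc i)) \<ge> Q * real_of_int (\<nu> i)" for i
  proof -
    have "real (n ((j + m * i) + m)) \<ge> lam ^ m * real (n (j + m * i))"
      by (rule lac_pow[where n=n and lam=lam, OF gap lam])
    moreover have "n (j + m * Suc i) = n ((j + m * i) + m)" by (simp add: algebra_simps)
    ultimately show ?thesis by (simp only: \<nu>_def Q_def of_int_of_nat_eq)
  qed
  define \<sigma> where "\<sigma> = (\<lambda>i. if b (K i) = 0 then 1 else sgn (b (K i)))"
  have \<sigma>1: "\<And>i. norm (\<sigma> i) = 1" by (simp add: \<sigma>_def norm_sgn)
  define M where "M = Suc (nat ((\<Sum>l\<in>G. int (n l)) + (\<Sum>i\<in>I. \<nu> i)))"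
  have M0: "M > 0" by (simp add: M_def)
  have sI0: "(\<Sum>i\<in>I. \<nu> i) \<ge> 0" using \<nu>pos by (simp add: sum_nonneg less_imp_le)
  have Mb: "\<bar>int (n l)\<bar> + (\<Sum>i\<in>I. \<nu> i) < int M" if "l \<in> G" for l
  proof -
    have "int (n l) \<le> (\<Sum>l\<in>G. int (n l))" using that G by (intro member_le_sum) auto
    then show ?thesis using sI0 by (simp add: M_def)
  qed
  have sG0: "(\<Sum>l\<in>G. int (n l)) \<ge> 0" by (simp add: sum_nonneg)
  have Mb0: "\<bar>0::int\<bar> + (\<Sum>i\<in>I. \<nu> i) < int M" using sI0 sG0 by (simp add: M_def)
  note main = AA_main[of \<nu> Q M I \<sigma>, OF \<nu>pos Q3 \<nu>lac M0 finI, rule_format]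
  define rp where "rp = (\<lambda>s. \<Prod>i\<in>I. 1 + Re (\<sigma> i * ex M (\<nu> i) s))"
  have RPr: "RP M \<nu> \<sigma> I s = complex_of_real (rp s)" for s
    unfolding rp_def by (rule RP_real(1)[OF \<sigma>1])
  have rp0: "rp s \<ge> 0" for s unfolding rp_def by (rule RP_real(2)[OF \<sigma>1])
  have sum_rp: "(\<Sum>s<M. rp s) = real M"
  proof -
    have "AA M \<nu> \<sigma> I 0 = of_nat M" using main[OF Mb0] by simp
    then have "complex_of_real (\<Sum>s<M. rp s) = of_nat M" by (simp add: AA_def RPr)
    then show ?thesis by (metis of_real_eq_iff of_real_of_nat_eq)
  qed
  define h where "h = (\<lambda>s. \<Sum>l\<in>G. b l * ex M (int (n l)) s)"
  define Gj where "Gj = {l\<in>G. l mod m = j}"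
  have AAl: "AA M \<nu> \<sigma> I (int (n l)) = (if l mod m = j then of_nat M * cnj (\<sigma> (l div m)) / 2 else 0)"
    if l: "l \<in> G" for l
  proof (cases "l mod m = j")
    case True
    then have lK: "l = K (l div m)" unfolding K_def by (metis mod_div_mult_eq add.commute mult.commute)
    then have iI: "l div m \<in> I" using l unfolding I_def by auto
    have "\<nu> (l div m) = int (n l)" using lK by (simp add: \<nu>_def K_def)
    then show ?thesis using main[OF Mb[OF l]] iI True by auto
  next
    case False
    have "int (n l) \<notin> spec \<nu> I"
    proof
      assume "int (n l) \<in> spec \<nu> I"
      then obtain i where "i \<in> I" "l = j + m * i"
        using lac_class[where n=n and lam=lam, OF gap lam pos Qbig finI] unfolding \<nu>_def by blast
      then have "l mod m = j" using jm by simp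
      with False show False by simp
    qed
    then show ?thesis using main[OF Mb[OF l]] False by simp
  qed
  have key: "(\<Sum>s<M. h s * RP M \<nu> \<sigma> I s) = of_nat M / 2 * of_real (\<Sum>l\<in>Gj. norm (b l))"
  proof -
    have "(\<Sum>s<M. h s * RP M \<nu> \<sigma> I s) = (\<Sum>l\<in>G. b l * AA M \<nu> \<sigma> I (int (n l)))"
      unfolding h_def AA_def by (simp add: sum_distrib_left sum_distrib_right sum.swap[of _ G] mult.assoc)
    also have "\<dots> = (\<Sum>l\<in>G. if l mod m = j then of_nat M / 2 * (b l * cnj (\<sigma> (l div m))) else 0)"
      by (intro sum.cong) (auto simp: AAl)
    also have "\<dots> = (\<Sum>l\<in>Gj. of_nat M / 2 * (b l * cnj (\<sigma> (l div m))))"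
      unfolding Gj_def using G by (rule sum.inter_filter[symmetric])
    also have "\<dots> = (\<Sum>l\<in>Gj. of_nat M / 2 * of_real (norm (b l)))"
    proof (intro sum.cong refl)
      fix l assume "l \<in> Gj"
      then have "K (l div m) = l" unfolding Gj_def K_def by (metis (mono_tags) mem_Collect_eq mod_div_mult_eq add.commute mult.commute)
      then have "b l * cnj (\<sigma> (l div m)) = of_real (norm (b l))"
        unfolding \<sigma>_def by (simp only: cnj_sgn_mult)
      then show "of_nat M / 2 * (b l * cnj (\<sigma> (l div m))) = of_nat M / 2 * of_real (norm (b l))"
        by simp
    qed
    finally show ?thesis by (simp add: sum_distrib_left)
  qed
  define H where "H = Max ((\<lambda>s. norm (h s)) ` {..<M})"
  have Hge: "norm (h s) \<le> H" if "s < M" for s unfolding H_def using that by (intro Max_ge) auto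
  obtain s0 where s0: "s0 < M" "H = norm (h s0)"
    unfolding H_def using M0 Max_in[of "(\<lambda>s. norm (h s)) ` {..<M}"] by fastforce
  have "real M / 2 * (\<Sum>l\<in>Gj. norm (b l)) = norm (\<Sum>s<M. h s * RP M \<nu> \<sigma> I s)"
    unfolding key by (simp add: norm_mult sum_nonneg del: of_real_sum)
  also have "\<dots> \<le> (\<Sum>s<M. norm (h s) * rp s)"
    by (rule order_trans[OF norm_sum]) (simp add: RPr norm_mult rp0)
  also have "\<dots> \<le> (\<Sum>s<M. H * rp s)"
    using Hge rp0 by (intro sum_mono mult_right_mono) auto
  also have "\<dots> = H * real M" by (simp add: sum_distrib_left[symmetric] sum_rp)
  finally have "(\<Sum>l\<in>Gj. norm (b l)) \<le> 2 * H" using M0 by (simp add: field_simps)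
  moreover have "h s0 = (\<Sum>l\<in>G. b l * exp (\<i> * of_real (2 * pi * real s0 / real M)) ^ n l)"
    unfolding h_def
  proof (intro sum.cong refl)
    fix l
    have ee: "ex M (int (n l)) s0 = exp (of_nat (n l) * (\<i> * of_real (2 * pi * real s0 / real M)))"
      unfolding ex_def by (simp add: algebra_simps)
    show "b l * ex M (int (n l)) s0 = b l * exp (\<i> * of_real (2 * pi * real s0 / real M)) ^ n l"
      by (simp only: ee exp_of_nat_mult)
  qed
  ultimately have "(\<Sum>l\<in>Gj. norm (b l)) \<le> 2 * norm (\<Sum>l\<in>G. b l * exp (\<i> * of_real (2 * pi * real s0 / real M)) ^ n l)"
    using s0 by simp
  then show ?thesis unfolding Gj_def by blast
qed

lemma sidon:
  fixes n :: "nat \<Rightarrow> nat"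
  assumes gap: "\<And>k. real (n (Suc k)) \<ge> lam * real (n k)" and lam: "lam > 1"
    and pos: "\<And>k. n k > 0"
  obtains Cs :: real where "Cs > 0"
    and "\<And>G (b :: nat \<Rightarrow> complex). finite G \<Longrightarrow> \<exists>t::real. (\<Sum>l\<in>G. norm (b l))
            \<le> Cs * norm (\<Sum>l\<in>G. b l * exp (\<i> * of_real t) ^ n l)"
proof -
  obtain m where m: "3 + 1 / (lam - 1) < lam ^ m" using real_arch_pow[OF lam] by blast
  have m0: "m > 0"
  proof (rule ccontr)
    assume "\<not> m > 0" then have "m = 0" by simp
    moreover have "1 / (lam - 1) > 0" using lam by simp
    ultimately have "3 + 1 / (lam - 1) < 1" "1 / (lam - 1) > 0" using m by auto
    then have False by linarith
    then show False .
  qed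
  show ?thesis
  proof (rule that[of "2 * real m"])
    show "2 * real m > 0" using m0 by simp
    fix G :: "nat set" and b :: "nat \<Rightarrow> complex" assume G: "finite G"
    define hh where "hh = (\<lambda>t::real. norm (\<Sum>l\<in>G. b l * exp (\<i> * of_real t) ^ n l))"
    define S where "S = (\<lambda>j. \<Sum>l\<in>{l\<in>G. l mod m = j}. norm (b l))"
    have "\<forall>j\<in>{..<m}. \<exists>t. S j \<le> 2 * hh t"
      using sidon_class[where n=n and lam=lam and b=b, OF gap lam pos m _ G] unfolding S_def hh_def by blast
    then obtain T where T: "\<And>j. j < m \<Longrightarrow> S j \<le> 2 * hh (T j)" by (metis lessThan_iff)
    define Hs where "Hs = Max ((\<lambda>j. hh (T j)) ` {..<m})"
    have Hge: "hh (T j) \<le> Hs" if "j < m" for j unfolding Hs_def using that by (intro Max_ge) auto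
    obtain j0 where j0: "j0 < m" "Hs = hh (T j0)"
      unfolding Hs_def using m0 Max_in[of "(\<lambda>j. hh (T j)) ` {..<m}"] by fastforce
    have "(\<Sum>l\<in>G. norm (b l)) = (\<Sum>j<m. S j)"
      unfolding S_def using G m0 by (intro sum.group[symmetric]) auto
    also have "\<dots> \<le> (\<Sum>j<m. 2 * Hs)"
      using T Hge by (intro sum_mono) (smt (verit) lessThan_iff)
    also have "\<dots> = 2 * real m * hh (T j0)" using j0 by simp
    finally show "\<exists>t. (\<Sum>l\<in>G. norm (b l)) \<le> 2 * real m * norm (\<Sum>l\<in>G. b l * exp (\<i> * of_real t) ^ n l)"
      unfolding hh_def by blast
  qed
qed

lemma exp_ge_pow_fact:
  fixes x :: real assumes "x \<ge> 0"
  shows "x ^ k / fact k \<le> exp x"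
proof -
  have "(\<Sum>n\<in>{k}. x ^ n / fact n) \<le> (\<Sum>n. x ^ n / fact n)"
    using assms summable_exp_generic[of x]
    by (intro sum_le_suminf) (auto simp: divide_inverse ac_simps)
  then show ?thesis by (simp add: exp_def divide_inverse ac_simps)
qed

lemma poly_exp_bound:
  fixes x :: real assumes "x > 0"
  shows "(2 * x) ^ q * exp (- x / 2) \<le> (2 ^ q * 2 ^ Suc q * fact (Suc q)) / x"
proof -
  have e: "(x / 2) ^ Suc q / fact (Suc q) \<le> exp (x / 2)" using assms by (intro exp_ge_pow_fact) simp
  have ep: "exp (x / 2) > 0" by simp
  have "(2 * x) ^ q * exp (- x / 2) * x = 2 ^ q * 2 ^ Suc q * ((x / 2) ^ Suc q / exp (x / 2))"
    using assms by (simp add: exp_minus field_simps power_mult_distrib power_divide)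
  also have "\<dots> \<le> 2 ^ q * 2 ^ Suc q * fact (Suc q)"
  proof -
    have h1: "(x / 2) ^ Suc q \<le> exp (x / 2) * fact (Suc q)"
      using e by (simp only: pos_divide_le_eq[OF fact_gt_zero])
    have "(x / 2) ^ Suc q / exp (x / 2) \<le> fact (Suc q)"
      using h1 by (simp only: pos_divide_le_eq[OF ep] mult.commute)
    then show ?thesis by (intro mult_left_mono) auto
  qed
  finally show ?thesis using assms by (simp add: field_simps)
qed

lemma lac_tele:
  fixes n :: "nat \<Rightarrow> nat"
  assumes gap: "\<And>k. real (n (Suc k)) \<ge> lam * real (n k)" and lam: "lam > 1" and pos: "\<And>k. n k > 0"
  shows "(\<Sum>k\<in>{j..<j + L}. 1 / real (n k)) \<le> lam / (lam - 1) / real (n j)"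
proof (induction L arbitrary: j)
  case 0 then show ?case using lam pos[of j] by simp
next
  case (Suc L)
  have split: "{j..<j + Suc L} = insert j {Suc j..<Suc j + L}" by auto
  have "(\<Sum>k\<in>{j..<j + Suc L}. 1 / real (n k)) = 1 / real (n j) + (\<Sum>k\<in>{Suc j..<Suc j + L}. 1 / real (n k))"
    unfolding split by simp
  also have "\<dots> \<le> 1 / real (n j) + lam / (lam - 1) / real (n (Suc j))" using Suc[of "Suc j"] by simp
  also have "\<dots> \<le> 1 / real (n j) + lam / (lam - 1) / (lam * real (n j))"
  proof -
    have "lam * real (n j) > 0" using lam pos[of j] by simp
    then have "1 / real (n (Suc j)) \<le> 1 / (lam * real (n j))" using gap[of j]
      by (intro divide_left_mono) auto
    then show ?thesis using lam by (simp add: divide_inverse mult_left_mono)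
  qed
  also have "\<dots> = lam / (lam - 1) / real (n j)" using lam pos[of j] by (simp add: field_simps)
  finally show ?case .
qed

lemma phi_mono:
  fixes \<mu> :: "real \<Rightarrow> real" and x y B :: real
  assumes mu_pos: "\<forall>r\<in>{0..<1}. \<mu> r > 0" and mu_decr: "antimono_on {0..<1} \<mu>"
    and "1 \<le> x" "x \<le> y"
  shows "1 / \<mu> (1 - 1 / x) \<le> 1 / \<mu> (1 - 1 / y)"
proof -
  have x: "1 - 1 / x \<in> {0..<1}" and y: "1 - 1 / y \<in> {0..<1}" using assms(3,4) by auto
  have "1 - 1 / x \<le> 1 - 1 / y" using assms(3,4) by (simp add: frac_le)
  then have "\<mu> (1 - 1 / y) \<le> \<mu> (1 - 1 / x)" using monotone_onD[OF mu_decr x y] by simp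
  then show ?thesis using mu_pos x y by (simp add: frac_le)
qed

lemma phi_double:
  fixes \<mu> :: "real \<Rightarrow> real" and x y B :: real
  assumes mu_pos: "\<forall>r\<in>{0..<1}. \<mu> r > 0" and B: "B > 0"
    and mu_doubling: "\<forall>d\<in>{0<..1}. \<mu> (1 - d / 2) \<ge> B * \<mu> (1 - d)"
    and "x \<ge> 1"
  shows "1 / \<mu> (1 - 1 / (2 * x)) \<le> (1 / B) * (1 / \<mu> (1 - 1 / x))"
proof -
  have d: "1 / x \<in> {0<..1}" using assms(4) by auto
  have h: "\<mu> (1 - (1 / x) / 2) \<ge> B * \<mu> (1 - 1 / x)" using mu_doubling d by blast
  have eq: "1 - (1 / x) / 2 = 1 - 1 / (2 * x)" by simp
  have "\<mu> (1 - 1 / (2 * x)) \<ge> B * \<mu> (1 - 1 / x)" using h unfolding eq .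
  moreover have "B * \<mu> (1 - 1 / x) > 0" using mu_pos B assms(4) by simp
  ultimately have "1 / \<mu> (1 - 1 / (2 * x)) \<le> 1 / (B * \<mu> (1 - 1 / x))" by (simp add: frac_le)
  then show ?thesis by simp
qed

lemma phi_growth:
  fixes \<mu> :: "real \<Rightarrow> real" and x y B :: real
  assumes mu_pos: "\<forall>r\<in>{0..<1}. \<mu> r > 0" and mu_decr: "antimono_on {0..<1} \<mu>"
    and B: "B > 0" and mu_doubling: "\<forall>d\<in>{0<..1}. \<mu> (1 - d / 2) \<ge> B * \<mu> (1 - d)"
    and q: "1 / B \<le> 2 ^ q"
    and x: "1 \<le> x" and xy: "x \<le> y"
  shows "1 / \<mu> (1 - 1 / y) \<le> (2 * y / x) ^ q * (1 / \<mu> (1 - 1 / x))"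
proof -
  define \<phi> where "\<phi> = (\<lambda>t::real. 1 / \<mu> (1 - 1 / t))"
  have \<phi>pos: "\<phi> t > 0" if "t \<ge> 1" for t using mu_pos that by (simp add: \<phi>_def)
  have dbl: "\<phi> (2 * t) \<le> 2 ^ q * \<phi> t" if "t \<ge> 1" for t
  proof -
    have "\<phi> (2 * t) \<le> (1 / B) * \<phi> t" unfolding \<phi>_def by (rule phi_double[OF mu_pos B mu_doubling that])
    also have "\<dots> \<le> 2 ^ q * \<phi> t" using q \<phi>pos[OF that] by (intro mult_right_mono) auto
    finally show ?thesis .
  qed
  have mono: "\<phi> s \<le> \<phi> t" if "1 \<le> s" "s \<le> t" for s t
    unfolding \<phi>_def by (rule phi_mono[OF mu_pos mu_decr that])
  have P: "\<forall>y. x \<le> y \<and> y \<le> 2 ^ j * x \<longrightarrow> \<phi> y \<le> (2 * y / x) ^ q * \<phi> x" for j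
  proof (induction j)
    case 0
    show ?case
    proof (intro allI impI)
      fix y assume "x \<le> y \<and> y \<le> 2 ^ 0 * x"
      then have "y = x" by simp
      moreover have "1 \<le> (2::real) ^ q" by simp
      ultimately show "\<phi> y \<le> (2 * y / x) ^ q * \<phi> x" using x \<phi>pos[OF x]
        by (simp add: mult_le_cancel_right1)
    qed
  next
    case (Suc j)
    show ?case
    proof (intro allI impI)
      fix y assume y: "x \<le> y \<and> y \<le> 2 ^ Suc j * x"
      have x0: "x > 0" using x by simp
      show "\<phi> y \<le> (2 * y / x) ^ q * \<phi> x"
      proof (cases "y \<le> 2 * x")
        case True
        have "\<phi> y \<le> \<phi> (2 * x)" using mono[of y "2 * x"] y x True by simp
        also have "\<dots> \<le> 2 ^ q * \<phi> x" by (rule dbl[OF x])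
        also have "\<dots> \<le> (2 * y / x) ^ q * \<phi> x"
        proof -
          have "2 \<le> 2 * y / x" using y x0 by (simp add: field_simps)
          then have "(2::real) ^ q \<le> (2 * y / x) ^ q" by (rule power_mono) simp
          then show ?thesis using \<phi>pos[OF x] by (intro mult_right_mono) auto
        qed
        finally show ?thesis .
      next
        case False
        have y2: "x \<le> y / 2 \<and> y / 2 \<le> 2 ^ j * x" using y False by auto
        have "\<phi> y = \<phi> (2 * (y / 2))" by simp
        also have "\<dots> \<le> 2 ^ q * \<phi> (y / 2)" using y2 x by (intro dbl) simp
        also have "\<dots> \<le> 2 ^ q * ((2 * (y / 2) / x) ^ q * \<phi> x)"
        proof -
          have "\<phi> (y / 2) \<le> (2 * (y / 2) / x) ^ q * \<phi> x" using Suc.IH y2 by blast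
          then show ?thesis by (intro mult_left_mono) auto
        qed
        also have "\<dots> = (2 * y / x) ^ q * \<phi> x"
        proof -
          have e1: "2 * (y / 2) / x = y / x" by simp
          have e2: "(2 * y / x) ^ q = 2 ^ q * (y / x) ^ q" by (metis power_mult_distrib times_divide_eq_right)
          show ?thesis by (simp only: e1 e2 mult.assoc)
        qed
        finally show ?thesis .
      qed
    qed
  qed
  obtain j where "y / x < 2 ^ j" using real_arch_pow[of 2 "y / x"] by auto
  then have "y \<le> 2 ^ j * x" using x by (simp add: field_simps)
  then show ?thesis using P[of j] xy unfolding \<phi>_def by blast
qed

lemma gap_strict_mono:
  fixes n :: "nat \<Rightarrow> nat"
  assumes gap: "\<And>k. real (n (Suc k)) \<ge> lam * real (n k)" and lam: "lam > 1" and pos: "\<And>k. n k > 0"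
  shows "strict_mono n"
  unfolding strict_mono_Suc_iff
proof
  fix k
  have "real (n k) < lam * real (n k)" using lam pos[of k] by simp
  then show "n k < n (Suc k)" using gap[of k] by linarith
qed

lemma finite_le_set:
  assumes "strict_mono (n :: nat \<Rightarrow> nat)"
  shows "finite {k. n k \<le> N}"
proof -
  have "{k. n k \<le> N} \<subseteq> {..N}" using strict_mono_imp_increasing[OF assms] by (auto intro: le_trans)
  then show ?thesis by (rule finite_subset) simp
qed

lemma lac_recip_sum:
  fixes n :: "nat \<Rightarrow> nat"
  assumes gap: "\<And>k. real (n (Suc k)) \<ge> lam * real (n k)" and lam: "lam > 1" and pos: "\<And>k. n k > 0"
    and X: "X > 0"
  shows "(\<Sum>k\<in>{k. k < L \<and> real (n k) > X}. 1 / real (n k)) \<le> lam / (lam - 1) / X"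
proof (cases "{k. k < L \<and> real (n k) > X} = {}")
  case True show ?thesis unfolding True using lam X by simp
next
  case False
  define Bs where "Bs = {k. k < L \<and> real (n k) > X}"
  have finB: "finite Bs" unfolding Bs_def by simp
  define k0 where "k0 = Min Bs"
  have k0B: "k0 \<in> Bs" using finB False unfolding k0_def Bs_def by (intro Min_in) auto
  have sub: "Bs \<subseteq> {k0..<k0 + (L - k0)}"
    using Min_le[OF finB] unfolding k0_def Bs_def by auto
  have "(\<Sum>k\<in>Bs. 1 / real (n k)) \<le> (\<Sum>k\<in>{k0..<k0 + (L - k0)}. 1 / real (n k))"
    using sub by (intro sum_mono2) auto
  also have "\<dots> \<le> lam / (lam - 1) / real (n k0)" by (rule lac_tele[where n=n and lam=lam, OF gap lam pos])
  also have "\<dots> \<le> lam / (lam - 1) / X"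
    using k0B X lam unfolding Bs_def by (intro divide_left_mono) auto
  finally show ?thesis unfolding Bs_def .
qed

lemma bound_if:
  fixes \<mu> :: "real \<Rightarrow> real" and B lam C :: real and n :: "nat \<Rightarrow> nat" and p :: "nat \<Rightarrow> real"
  assumes mu_pos: "\<forall>r\<in>{0..<1}. \<mu> r > 0" and mu_decr: "antimono_on {0..<1} \<mu>"
    and B_pos: "B > 0" and mu_doubling: "\<forall>d\<in>{0<..1}. \<mu> (1 - d / 2) \<ge> B * \<mu> (1 - d)"
    and pos: "\<And>k. n k > 0" and lam: "lam > 1"
    and gap: "\<And>k. real (n (Suc k)) \<ge> lam * real (n k)"
    and p0: "\<And>k. p k \<ge> 0"
    and hyp: "\<forall>N::nat. N \<ge> 1 \<longrightarrow> (\<Sum>k\<in>{k. n k \<le> N}. p k) \<le> C / \<mu> (1 - 1 / real N)"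
    and summ: "\<And>r. 0 \<le> r \<Longrightarrow> r < 1 \<Longrightarrow> summable (\<lambda>k. p k * r ^ (n k - 1))"
  shows "\<exists>K. \<forall>r. 1 / 2 \<le> r \<and> r < 1 \<longrightarrow> (\<Sum>k. p k * r ^ (n k - 1)) \<le> K / \<mu> r"
proof -
  have sm: "strict_mono n" by (rule gap_strict_mono[where n=n and lam=lam, OF gap lam pos])
  have fin: "\<And>N. finite {k. n k \<le> N}" by (rule finite_le_set[OF sm])
  have C0: "C \<ge> 0"
  proof -
    have "0 \<le> (\<Sum>k\<in>{k. n k \<le> 1}. p k)" using p0 by (simp add: sum_nonneg)
    also have "\<dots> \<le> C / \<mu> (1 - 1 / real (1::nat))" using hyp by blast
    finally have h: "0 \<le> C / \<mu> 0" by simp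
    have "\<mu> 0 > 0" using mu_pos by simp
    then show ?thesis using h by (simp add: zero_le_divide_iff)
  qed
  obtain q where q: "1 / B < 2 ^ q" using real_arch_pow[of 2 "1 / B"] by auto
  define A0 :: real where "A0 = 2 ^ q * 2 ^ Suc q * fact (Suc q)"
  have A00: "A0 \<ge> 0" by (simp add: A0_def)
  define K where "K = C + 2 * C * A0 * (lam / (lam - 1))"
  have K0: "K \<ge> 0" using C0 A00 lam by (simp add: K_def)
  show ?thesis
  proof (intro exI allI impI)
    fix r :: real assume r: "1 / 2 \<le> r \<and> r < 1"
    have r0: "0 < r" "r < 1" using r by auto
    define N0 where "N0 = nat \<lfloor>1 / (1 - r)\<rfloor>"
    have inv2: "1 / (1 - r) \<ge> 2" using r by (simp add: field_simps)
    have f3: "(2::int) \<le> \<lfloor>1 / (1 - r)\<rfloor>" using inv2 by (simp add: le_floor_iff)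
    have fl: "real N0 = of_int \<lfloor>1 / (1 - r)\<rfloor>" unfolding N0_def using f3 by (simp only: of_nat_nat)
    have f1: "of_int \<lfloor>1 / (1 - r)\<rfloor> \<le> 1 / (1 - r)" by (rule of_int_floor_le)
    have f2: "1 / (1 - r) < of_int \<lfloor>1 / (1 - r)\<rfloor> + 1" by (rule real_of_int_floor_add_one_gt)
    have N0le: "real N0 \<le> 1 / (1 - r)" using fl f1 by linarith
    have N0gt: "real N0 > 1 / (1 - r) - 1" using fl f2 by linarith
    have N02: "real N0 \<ge> 2" using fl f3 by linarith
    have N0pos: "real N0 > 0" using N02 by simp
    have onemr: "1 - r \<ge> 1 / (2 * real N0)"
    proof -
      have "1 / (1 - r) < real N0 + 1" using N0gt by simp
      also have "\<dots> \<le> 2 * real N0" using N02 by simp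
      finally have "1 / (1 - r) < 2 * real N0" .
      then show ?thesis using r0 N0pos by (simp add: field_simps)
    qed
    define ph0 where "ph0 = 1 / \<mu> (1 - 1 / real N0)"
    have ph0r: "ph0 \<le> 1 / \<mu> r"
    proof -
      have "1 / \<mu> (1 - 1 / real N0) \<le> 1 / \<mu> (1 - 1 / (1 / (1 - r)))"
        using N02 N0le by (intro phi_mono[OF mu_pos mu_decr]) auto
      then show ?thesis unfolding ph0_def by simp
    qed
    have inI: "1 - 1 / real N0 \<in> {0..<1}" using N02 by simp
    have ph00: "ph0 \<ge> 0" unfolding ph0_def using mu_pos inI by (simp add: less_imp_le)
    define f where "f = (\<lambda>k. p k * r ^ (n k - 1))"
    have f0: "f k \<ge> 0" for k unfolding f_def using p0 r0 by simp
    have partial: "(\<Sum>k<L. f k) \<le> K * ph0" for L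
    proof -
      define As where "As = {k. k < L \<and> n k \<le> N0}"
      define Bs where "Bs = {k. k < L \<and> real (n k) > real N0}"
      have un: "{..<L} = As \<union> Bs" and dj: "As \<inter> Bs = {}" unfolding As_def Bs_def by auto
      have finA: "finite As" and finB: "finite Bs" unfolding As_def Bs_def by auto
      have "(\<Sum>k<L. f k) = (\<Sum>k\<in>As. f k) + (\<Sum>k\<in>Bs. f k)"
        unfolding un using finA finB dj by (rule sum.union_disjoint)
      moreover have "(\<Sum>k\<in>As. f k) \<le> C * ph0"
      proof -
        have "(\<Sum>k\<in>As. f k) \<le> (\<Sum>k\<in>As. p k)"
        proof (rule sum_mono)
          fix k have "r ^ (n k - 1) \<le> 1" using r0 by (simp add: power_le_one)
          then show "f k \<le> p k" unfolding f_def using p0[of k] by (simp add: mult_left_le)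
        qed
        also have "\<dots> \<le> (\<Sum>k\<in>{k. n k \<le> N0}. p k)"
          using fin p0 unfolding As_def by (intro sum_mono2) auto
        also have "\<dots> \<le> C / \<mu> (1 - 1 / real N0)" using hyp N02 by simp
        finally show ?thesis unfolding ph0_def by simp
      qed
      moreover have "(\<Sum>k\<in>Bs. f k) \<le> 2 * C * A0 * (lam / (lam - 1)) * ph0"
      proof -
        have tm: "f k \<le> (2 * C * A0 * ph0 * real N0) * (1 / real (n k))" if k: "k \<in> Bs" for k
        proof -
          have nk: "real (n k) > real N0" using k unfolding Bs_def by simp
          define x where "x = real (n k) / real N0"
          have x1: "x > 1" unfolding x_def using nk N0pos by simp
          have pk: "p k \<le> C / \<mu> (1 - 1 / real (n k))"
          proof -
            have "p k \<le> (\<Sum>k'\<in>{k'. n k' \<le> n k}. p k')"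
              using fin p0 by (intro member_le_sum) auto
            also have "\<dots> \<le> C / \<mu> (1 - 1 / real (n k))" using hyp pos[of k] by simp
            finally show ?thesis .
          qed
          have gr: "1 / \<mu> (1 - 1 / real (n k)) \<le> (2 * real (n k) / real N0) ^ q * ph0"
            unfolding ph0_def using N02 nk q
            by (intro phi_growth[OF mu_pos mu_decr B_pos mu_doubling]) auto
          have pk2: "p k \<le> C * ((2 * x) ^ q * ph0)"
          proof -
            have "p k \<le> C * (1 / \<mu> (1 - 1 / real (n k)))" using pk by simp
            also have "\<dots> \<le> C * ((2 * real (n k) / real N0) ^ q * ph0)" using gr C0 by (rule mult_left_mono)
            finally show ?thesis unfolding x_def by simp
          qed
          have rp: "r ^ (n k - 1) \<le> 2 * exp (- x / 2)"
          proof -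
            have "r \<le> exp (- (1 - r))" using exp_ge_add_one_self[of "- (1 - r)"] by simp
            then have "r ^ n k \<le> exp (- (1 - r)) ^ n k" using r0 by (intro power_mono) auto
            also have "\<dots> = exp (- (1 - r) * real (n k))" by (simp add: exp_of_nat_mult[symmetric] mult.commute)
            also have "\<dots> \<le> exp (- x / 2)"
            proof -
              have "x / 2 = real (n k) * (1 / (2 * real N0))" unfolding x_def by simp
              also have "\<dots> \<le> real (n k) * (1 - r)" using onemr by (intro mult_left_mono) auto
              finally have "x / 2 \<le> real (n k) * (1 - r)" .
              then have "- (1 - r) * real (n k) \<le> - x / 2" by (simp add: algebra_simps)
              then show ?thesis by simp
            qed
            finally have rn: "r ^ n k \<le> exp (- x / 2)" .
            have "r ^ n k = r * r ^ (n k - 1)" using pos[of k] by (simp add: power_eq_if)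
            then have "r ^ (n k - 1) = r ^ n k / r" using r0 by simp
            also have "\<dots> \<le> 2 * r ^ n k" using r r0 by (simp add: field_simps)
            also have "\<dots> \<le> 2 * exp (- x / 2)" using rn by simp
            finally show ?thesis .
          qed
          have "f k \<le> C * ((2 * x) ^ q * ph0) * (2 * exp (- x / 2))"
            unfolding f_def using pk2 rp p0[of k] r0 by (intro mult_mono) auto
          also have "\<dots> = 2 * C * ph0 * ((2 * x) ^ q * exp (- x / 2))" by (simp add: algebra_simps)
          also have "\<dots> \<le> 2 * C * ph0 * (A0 / x)"
            using poly_exp_bound[of x q] x1 C0 ph00 unfolding A0_def by (intro mult_left_mono) auto
          also have "\<dots> = (2 * C * A0 * ph0 * real N0) * (1 / real (n k))"
            unfolding x_def using N0pos nk by (simp add: field_simps)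
          finally show ?thesis .
        qed
        have "(\<Sum>k\<in>Bs. f k) \<le> (\<Sum>k\<in>Bs. (2 * C * A0 * ph0 * real N0) * (1 / real (n k)))"
          using tm by (rule sum_mono)
        also have "\<dots> = (2 * C * A0 * ph0 * real N0) * (\<Sum>k\<in>Bs. 1 / real (n k))"
          by (simp add: sum_distrib_left)
        also have "\<dots> \<le> (2 * C * A0 * ph0 * real N0) * (lam / (lam - 1) / real N0)"
          using lac_recip_sum[where n=n and lam=lam and L=L, OF gap lam pos N0pos] C0 A00 ph00 N0pos unfolding Bs_def
          by (intro mult_left_mono) auto
        also have "\<dots> = 2 * C * A0 * (lam / (lam - 1)) * ph0" using N0pos by simp
        finally show ?thesis .
      qed
      ultimately show ?thesis unfolding K_def by (simp add: algebra_simps)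
    qed
    have "(\<Sum>k. f k) \<le> K * ph0"
      by (rule suminf_le_const[OF _ partial]) (use summ r0 in \<open>simp add: f_def\<close>)
    also have "\<dots> \<le> K * (1 / \<mu> r)" using ph0r K0 by (rule mult_left_mono)
    finally show "(\<Sum>k. p k * r ^ (n k - 1)) \<le> K / \<mu> r" unfolding f_def by simp
  qed
qed

lemma tail_norm:
  fixes f :: "nat \<Rightarrow> complex"
  assumes sn: "summable (\<lambda>k. norm (f k))"
  shows "norm ((\<Sum>k. f k) - (\<Sum>k<L. f k)) \<le> (\<Sum>k. norm (f k)) - (\<Sum>k<L. norm (f k))"
proof -
  have sf: "summable f" using sn by (rule summable_norm_cancel)
  have "norm ((\<Sum>k. f k) - (\<Sum>k<L. f k)) = norm (\<Sum>k. f (k + L))"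
    using suminf_split_initial_segment[OF sf, of L] by simp
  also have "\<dots> \<le> (\<Sum>k. norm (f (k + L)))"
    by (rule summable_norm) (rule summable_ignore_initial_segment[OF sn])
  also have "\<dots> = (\<Sum>k. norm (f k)) - (\<Sum>k<L. norm (f k))"
    using suminf_split_initial_segment[OF sn, of L] by simp
  finally show ?thesis .
qed

lemma tail_small:
  fixes g :: "nat \<Rightarrow> real"
  assumes sn: "summable g" and e: "e > 0"
  obtains L where "L \<ge> L0" "(\<Sum>k. g k) - (\<Sum>k<L. g k) \<le> e"
proof -
  have "(\<lambda>L. \<Sum>k<L. g k) \<longlonglongrightarrow> (\<Sum>k. g k)"
    using sn by (simp add: summable_LIMSEQ)
  then obtain N1 where N1: "\<And>L. L \<ge> N1 \<Longrightarrow> dist (\<Sum>k<L. g k) (\<Sum>k. g k) < e"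
    using e unfolding lim_sequentially by blast
  define L where "L = max L0 N1"
  have "(\<Sum>k. g k) - (\<Sum>k<L. g k) \<le> e" using N1[of L] by (simp add: L_def dist_real_def)
  then show ?thesis using that[of L] by (simp add: L_def)
qed

lemma pow_lower:
  assumes N: "N \<ge> (2::nat)"
  shows "(1 - 1 / real N) ^ N \<ge> exp (- 2)"
proof -
  define r where "r = 1 - 1 / real N"
  have r0: "r > 0" using N by (simp add: r_def)
  have ir: "1 / r = 1 + 1 / (real N - 1)" using N by (simp add: r_def field_simps)
  have "1 / r \<le> exp (1 / (real N - 1))" unfolding ir by (rule exp_ge_add_one_self)
  then have "(1 / r) ^ N \<le> exp (1 / (real N - 1)) ^ N" using r0 by (intro power_mono) auto
  also have "\<dots> = exp (real N / (real N - 1))" by (simp add: exp_of_nat_mult[symmetric])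
  also have "\<dots> \<le> exp 2" using N by (simp add: field_simps)
  finally have "1 / r ^ N \<le> exp 2" by (simp add: power_divide)
  then have "1 \<le> exp 2 * r ^ N" using r0 by (simp add: field_simps)
  then show ?thesis unfolding r_def[symmetric] by (simp add: exp_minus field_simps)
qed

lemma bound_onlyif:
  fixes \<mu> :: "real \<Rightarrow> real" and B lam M :: real and n :: "nat \<Rightarrow> nat" and b :: "nat \<Rightarrow> complex"
  assumes mu_pos: "\<forall>r\<in>{0..<1}. \<mu> r > 0" and mu_decr: "antimono_on {0..<1} \<mu>"
    and B_pos: "B > 0" and mu_doubling: "\<forall>d\<in>{0<..1}. \<mu> (1 - d / 2) \<ge> B * \<mu> (1 - d)"
    and pos: "\<And>k. n k > 0" and lam: "lam > 1"
    and gap: "\<And>k. real (n (Suc k)) \<ge> lam * real (n k)"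
    and bsum: "\<And>z. norm z < 1 \<Longrightarrow> summable (\<lambda>k. norm (b k * z ^ n k))"
    and Mb: "\<And>z. norm z < 1 \<Longrightarrow> \<mu> (norm z) * norm (\<Sum>k. b k * z ^ n k) \<le> M"
  shows "\<exists>C. \<forall>N::nat. N \<ge> 1 \<longrightarrow> (\<Sum>k\<in>{k. n k \<le> N}. norm (b k)) \<le> C / \<mu> (1 - 1 / real N)"
proof -
  have sm: "strict_mono n" by (rule gap_strict_mono[where n=n and lam=lam, OF gap lam pos])
  have fin: "\<And>N. finite {k. n k \<le> N}" by (rule finite_le_set[OF sm])
  obtain Cs where Cs: "Cs > 0" and sid: "\<And>G (bb :: nat \<Rightarrow> complex). finite G \<Longrightarrow> \<exists>t::real. (\<Sum>l\<in>G. norm (bb l))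
            \<le> Cs * norm (\<Sum>l\<in>G. bb l * exp (\<i> * of_real t) ^ n l)"
    using sidon[where n=n and lam=lam, OF gap lam pos] by blast
  have M0: "M \<ge> 0"
  proof -
    have "\<mu> 0 * norm (\<Sum>k. b k * 0 ^ n k) \<le> M" using Mb[of 0] by simp
    moreover have "\<mu> 0 > 0" using mu_pos by simp
    ultimately show ?thesis by (smt (verit) mult_nonneg_nonneg norm_ge_zero)
  qed
  define X where "X = exp 2 * Cs * (M + 1)"
  have X0: "X \<ge> 0" using Cs M0 by (simp add: X_def)
  have main: "(\<Sum>k\<in>{k. n k \<le> N}. norm (b k)) \<le> X / \<mu> (1 - 1 / real N)" if N: "N \<ge> 2" for N
  proof -
    define r where "r = 1 - 1 / real N"
    have r0: "0 < r" "r < 1" using N by (auto simp: r_def)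
    have mur: "\<mu> r > 0" using mu_pos r0 by simp
    define F where "F = {k. n k \<le> N}"
    have subF: "F \<subseteq> {..<Suc N}"
    proof
      fix k assume "k \<in> F"
      then have "n k \<le> N" by (simp add: F_def)
      moreover have "k \<le> n k" by (rule strict_mono_imp_increasing[OF sm])
      ultimately show "k \<in> {..<Suc N}" by simp
    qed
    have sr: "summable (\<lambda>k. norm (b k * complex_of_real r ^ n k))" using bsum[of "of_real r"] r0 by simp
    obtain L where L: "L \<ge> Suc N"
      and tl: "(\<Sum>k. norm (b k * complex_of_real r ^ n k)) - (\<Sum>k<L. norm (b k * complex_of_real r ^ n k)) \<le> 1 / \<mu> r"
      using tail_small[OF sr, of "1 / \<mu> r" "Suc N"] mur by auto
    obtain t where t: "(\<Sum>l<L. norm (b l * complex_of_real r ^ n l))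
        \<le> Cs * norm (\<Sum>l<L. (b l * complex_of_real r ^ n l) * exp (\<i> * of_real t) ^ n l)"
      using sid[of "{..<L}" "\<lambda>l. b l * complex_of_real r ^ n l"] by auto
    define z where "z = complex_of_real r * exp (\<i> * of_real t)"
    have nz: "norm z = r" using r0 by (simp add: z_def norm_mult)
    have zt: "(\<Sum>l<L. (b l * complex_of_real r ^ n l) * exp (\<i> * of_real t) ^ n l) = (\<Sum>l<L. b l * z ^ n l)"
      by (simp add: z_def power_mult_distrib mult.assoc)
    have gz: "norm (b k * z ^ n k) = norm (b k * complex_of_real r ^ n k)" for k
      using nz r0 by (simp add: norm_mult norm_power)
    have sz: "summable (\<lambda>k. norm (b k * z ^ n k))" using bsum[of z] nz r0 by simp
    have tlz: "norm ((\<Sum>k. b k * z ^ n k) - (\<Sum>k<L. b k * z ^ n k)) \<le> 1 / \<mu> r"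
      using tail_norm[OF sz, of L] tl unfolding gz by linarith
    have Mz: "norm (\<Sum>k. b k * z ^ n k) \<le> M / \<mu> r"
      using Mb[of z] nz r0 mur by (simp add: field_simps)
    have "(\<Sum>k\<in>F. norm (b k) * r ^ n k) \<le> (\<Sum>k<L. norm (b k) * r ^ n k)"
      using subF L r0 by (intro sum_mono2) auto
    also have "\<dots> = (\<Sum>l<L. norm (b l * complex_of_real r ^ n l))"
      using r0 by (simp add: norm_mult norm_power)
    also have "\<dots> \<le> Cs * norm (\<Sum>l<L. b l * z ^ n l)" using t zt by simp
    also have "\<dots> \<le> Cs * (M / \<mu> r + 1 / \<mu> r)"
    proof -
      have "norm (\<Sum>l<L. b l * z ^ n l) \<le> norm (\<Sum>k. b k * z ^ n k) + norm ((\<Sum>k. b k * z ^ n k) - (\<Sum>k<L. b k * z ^ n k))"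
        by (metis norm_minus_commute norm_triangle_sub)
      then show ?thesis using Mz tlz Cs by (intro mult_left_mono) auto
    qed
    also have "Cs * (M / \<mu> r + 1 / \<mu> r) = Cs * (M + 1) / \<mu> r" using mur by (simp add: field_simps)
    finally have A: "(\<Sum>k\<in>F. norm (b k) * r ^ n k) \<le> Cs * (M + 1) / \<mu> r" .
    have rN: "r ^ N \<ge> exp (-2)" unfolding r_def by (rule pow_lower[OF N])
    have "(\<Sum>k\<in>F. norm (b k)) \<le> (\<Sum>k\<in>F. exp 2 * (norm (b k) * r ^ n k))"
    proof (rule sum_mono)
      fix k assume k: "k \<in> F"
      have "r ^ N \<le> r ^ n k" using k r0 unfolding F_def by (intro power_decreasing) auto
      then have "exp (-2) \<le> r ^ n k" using rN by linarith
      then have "1 \<le> exp 2 * r ^ n k" by (simp add: exp_minus field_simps)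
      then show "norm (b k) \<le> exp 2 * (norm (b k) * r ^ n k)"
        using mult_left_mono[of 1 "exp 2 * r ^ n k" "norm (b k)"] by (simp add: algebra_simps)
    qed
    also have "\<dots> = exp 2 * (\<Sum>k\<in>F. norm (b k) * r ^ n k)" by (simp add: sum_distrib_left)
    also have "\<dots> \<le> exp 2 * (Cs * (M + 1) / \<mu> r)" using A by (intro mult_left_mono) auto
    also have "\<dots> = X / \<mu> r" by (simp add: X_def)
    finally show ?thesis unfolding F_def r_def .
  qed
  have B1: "B \<le> 1"
  proof -
    have "B * \<mu> 0 \<le> \<mu> (1 / 2)" using bspec[OF mu_doubling, of 1] by simp
    moreover have "\<mu> (1 / 2) \<le> \<mu> 0" using monotone_onD[OF mu_decr, of 0 "1/2"] by simp
    moreover have "\<mu> 0 > 0" using mu_pos by simp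
    ultimately have "B * \<mu> 0 \<le> 1 * \<mu> 0" "\<mu> 0 > 0" by linarith+
    then show ?thesis by (rule mult_right_le_imp_le)
  qed
  show ?thesis
  proof (intro exI allI impI)
    fix N :: nat assume N1: "N \<ge> 1"
    have mu0: "\<mu> 0 > 0" and muh: "\<mu> (1/2) > 0" using mu_pos by auto
    show "(\<Sum>k\<in>{k. n k \<le> N}. norm (b k)) \<le> (X / B) / \<mu> (1 - 1 / real N)"
    proof (cases "N \<ge> 2")
      case True
      have mN: "\<mu> (1 - 1 / real N) > 0" using mu_pos True by simp
      have "B * X \<le> 1 * X" using X0 B1 by (intro mult_right_mono) auto
      then have "X \<le> X / B" using B_pos by (simp add: field_simps)
      then have "X / \<mu> (1 - 1 / real N) \<le> (X / B) / \<mu> (1 - 1 / real N)" using mN by (rule divide_right_mono[OF _ less_imp_le])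
      then show ?thesis using main[OF True] by linarith
    next
      case False
      then have N1': "N = 1" using N1 by simp
      have "(\<Sum>k\<in>{k. n k \<le> N}. norm (b k)) \<le> (\<Sum>k\<in>{k. n k \<le> 2}. norm (b k))"
        using fin N1' by (intro sum_mono2) auto
      also have "\<dots> \<le> X / \<mu> (1 - 1 / real (2::nat))" using main[of 2] by simp
      also have "\<dots> \<le> (X / B) / \<mu> 0"
      proof -
        have "\<mu> (1 - 1 / 2) \<ge> B * \<mu> (1 - 1)" using bspec[OF mu_doubling, of 1] by simp
        then have "B * \<mu> 0 \<le> \<mu> (1 / 2)" by simp
        then have "X / \<mu> (1 / 2) \<le> X / (B * \<mu> 0)" using X0 B_pos mu0 muh by (intro divide_left_mono) auto
        then show ?thesis by simp
      qed
      finally show ?thesis using N1' by simp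
    qed
  qed
qed

theorem corollary6:
  fixes \<mu> :: "real \<Rightarrow> real" and B lam :: real
    and n :: "nat \<Rightarrow> nat" and a :: "nat \<Rightarrow> complex" and u :: "complex \<Rightarrow> real"
  assumes mu_pos: "\<forall>r\<in>{0..<1}. \<mu> r > 0"
    and mu_decr: "antimono_on {0..<1} \<mu>"
    and mu_cont: "continuous_on {0..<1} \<mu>"
    and mu_lim: "(\<mu> \<longlongrightarrow> 0) (at_left 1)"
    and B_pos: "B > 0"
    and mu_doubling: "\<forall>d\<in>{0<..1}. \<mu> (1 - d / 2) \<ge> B * \<mu> (1 - d)"
    and n_pos: "\<forall>k. n k > 0"
    and lam_gt1: "lam > 1"
    and gap: "\<forall>k. real (n (Suc k)) \<ge> lam * real (n k)"
    and conv: "\<forall>z. norm z < 1 \<longrightarrow> summable (\<lambda>k. a k * z ^ n k)"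
    and u_def: "\<forall>z. u z = Re (\<Sum>k. a k * z ^ n k)"
  shows "bloch_type \<mu> u \<longleftrightarrow>
    (\<exists>C. \<forall>N::nat. N \<ge> 1 \<longrightarrow>
        (\<Sum>k\<in>{k. n k \<le> N}. real (n k) * norm (a k)) \<le> C / \<mu> (1 - 1 / real N))"
proof -
  have pos: "\<And>k. n k > 0" using n_pos by blast
  have gapk: "\<And>k. real (n (Suc k)) \<ge> lam * real (n k)" using gap by blast
  have convk: "\<And>z. norm z < 1 \<Longrightarrow> summable (\<lambda>k. a k * z ^ n k)" using conv by blast
  have sm: "strict_mono n" by (rule gap_strict_mono[where n=n and lam=lam, OF gapk lam_gt1 pos])
  define c where "c = gcoef n a"
  have csum: "\<And>z. norm z < 1 \<Longrightarrow> (\<lambda>m. c m * z ^ m) sums (\<Sum>k. a k * z ^ n k)"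
    unfolding c_def by (rule gap_powser[OF sm convk])
  have cs: "\<And>z. norm z < 1 \<Longrightarrow> summable (\<lambda>m. c m * z ^ m)" using csum sums_summable by blast
  have c1s: "\<And>z. norm z < 1 \<Longrightarrow> summable (\<lambda>m. diffs c m * z ^ m)"
    by (rule termdiff_converges[OF _ cs])
  have c2s: "\<And>z. norm z < 1 \<Longrightarrow> summable (\<lambda>m. diffs (diffs c) m * z ^ m)"
    by (rule termdiff_converges[OF _ c1s])
  define F where "F = (\<lambda>z. \<Sum>m. c m * z ^ m)"
  define F1 where "F1 = (\<lambda>z. \<Sum>m. diffs c m * z ^ m)"
  define F2 where "F2 = (\<lambda>z. \<Sum>m. diffs (diffs c) m * z ^ m)"
  define F3 where "F3 = (\<lambda>z. \<Sum>m. diffs (diffs (diffs c)) m * z ^ m)"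
  define S where "S = ball (0::complex) 1"
  have inS: "\<And>w. w \<in> S \<longleftrightarrow> norm w < 1" by (simp add: S_def)
  have d1: "\<And>w. w \<in> S \<Longrightarrow> (F has_field_derivative F1 w) (at w)"
    unfolding F_def F1_def inS by (rule termdiffs_strong'[OF cs])
  have d2: "\<And>w. w \<in> S \<Longrightarrow> (F1 has_field_derivative F2 w) (at w)"
    unfolding F1_def F2_def inS by (rule termdiffs_strong'[OF c1s])
  have d3: "\<And>w. w \<in> S \<Longrightarrow> (F2 has_field_derivative F3 w) (at w)"
    unfolding F2_def F3_def inS by (rule termdiffs_strong'[OF c2s])
  have uF: "\<And>w. w \<in> S \<Longrightarrow> u w = Re (F w)"
    unfolding inS F_def using u_def csum sums_unique by metis
  have oS: "open S" by (simp add: S_def)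
  note H = harmonic_Re[OF oS uF d1 d2 d3]
  have z0: "(\<lambda>k. a k * (0::complex) ^ n k) = (\<lambda>k. 0)"
  proof
    fix k show "a k * (0::complex) ^ n k = 0" using pos[of k] by (simp add: power_0_left)
  qed
  have u0: "u 0 = 0" using u_def z0 by simp
  have bloch_iff: "bloch_type \<mu> u \<longleftrightarrow> (\<exists>M. \<forall>z. norm z < 1 \<longrightarrow> \<mu> (norm z) * norm (F1 z) \<le> M)"
  proof -
    have ballS: "\<And>z::complex. z \<in> ball 0 1 \<longleftrightarrow> norm z < 1" using inS unfolding S_def by blast
    have e: "(\<bar>u 0\<bar> + \<mu> (norm z) * grad_norm u z \<le> M) \<longleftrightarrow> (\<mu> (norm z) * norm (F1 z) \<le> M)"
      if "norm z < 1" for z :: complex and M using H(2)[of z] u0 that inS by simp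
    have "(\<forall>z\<in>ball 0 1. \<bar>u 0\<bar> + \<mu> (norm z) * grad_norm u z \<le> M) \<longleftrightarrow>
          (\<forall>z. norm z < 1 \<longrightarrow> \<mu> (norm z) * norm (F1 z) \<le> M)" for M
      using e ballS by blast
    moreover have "harmonic_on (ball 0 1) u" using H(1) unfolding S_def .
    ultimately show ?thesis unfolding bloch_type_def by simp
  qed
  have gsum: "(\<lambda>k. of_nat (n k) * a k * z ^ (n k - 1)) sums F1 z" if z: "norm z < 1" for z
    unfolding diffs_gap_powser[OF sm pos] c_def[symmetric] F1_def using c1s[OF z] by (simp add: summable_sums)
  have gnorm: "summable (\<lambda>k. norm (of_nat (n k) * a k * z ^ (n k - 1)))" if z: "norm z < 1" for z
  proof -
    define x where "x = complex_of_real ((1 + norm z) / 2)"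
    have nx0: "norm x = (1 + norm z) / 2" unfolding x_def norm_of_real by simp
    have nx: "norm x < 1" "norm z < norm x" using z unfolding nx0 by auto
    have "summable (\<lambda>m. norm (diffs c m * z ^ m))" by (rule powser_insidea[OF c1s[OF nx(1)] nx(2)])
    then have "(\<lambda>m. norm (diffs (gcoef n a) m * z ^ m)) sums (\<Sum>m. norm (diffs c m * z ^ m))"
      unfolding c_def by (simp add: summable_sums)
    then show ?thesis unfolding diffs_gap_norm[OF sm pos, symmetric] by (rule sums_summable)
  qed
  show ?thesis
  proof
    assume "bloch_type \<mu> u"
    then obtain M where M: "\<And>z. norm z < 1 \<Longrightarrow> \<mu> (norm z) * norm (F1 z) \<le> M" using bloch_iff by blast
    define b where "b = (\<lambda>k. of_nat (n k) * a k)"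
    have bz: "b k * z ^ n k = z * (of_nat (n k) * a k * z ^ (n k - 1))" for k z
      using pos[of k] unfolding b_def by (cases "n k") auto
    have bsum: "summable (\<lambda>k. norm (b k * z ^ n k))" if z: "norm z < 1" for z
    proof -
      have s: "summable (\<lambda>k. norm z * norm (of_nat (n k) * a k * z ^ (n k - 1)))"
        using gnorm[OF z] by (rule summable_mult)
      show ?thesis unfolding bz norm_mult[of z] by (rule s)
    qed
    have Mb: "\<mu> (norm z) * norm (\<Sum>k. b k * z ^ n k) \<le> M" if z: "norm z < 1" for z
    proof -
      have "(\<lambda>k. b k * z ^ n k) sums (z * F1 z)" unfolding bz by (intro sums_mult gsum z)
      then have e: "(\<Sum>k. b k * z ^ n k) = z * F1 z" by (rule sums_unique[symmetric])
      have mp: "\<mu> (norm z) > 0" using mu_pos z by simp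
      have "\<mu> (norm z) * norm (z * F1 z) = norm z * (\<mu> (norm z) * norm (F1 z))" by (simp add: norm_mult)
      also have "\<dots> \<le> 1 * (\<mu> (norm z) * norm (F1 z))"
        using z mp by (intro mult_right_mono) auto
      also have "\<dots> \<le> M" using M[OF z] by simp
      finally show ?thesis unfolding e .
    qed
    obtain C where C: "\<forall>N::nat. N \<ge> 1 \<longrightarrow> (\<Sum>k\<in>{k. n k \<le> N}. norm (b k)) \<le> C / \<mu> (1 - 1 / real N)"
      using bound_onlyif[where n=n and lam=lam and b=b, OF mu_pos mu_decr B_pos mu_doubling pos lam_gt1 gapk bsum Mb]
      by blast
    have "norm (b k) = real (n k) * norm (a k)" for k by (simp add: b_def norm_mult)
    then show "\<exists>C. \<forall>N::nat. N \<ge> 1 \<longrightarrow> (\<Sum>k\<in>{k. n k \<le> N}. real (n k) * norm (a k)) \<le> C / \<mu> (1 - 1 / real N)"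
      using C by auto
  next
    assume hyp: "\<exists>C. \<forall>N::nat. N \<ge> 1 \<longrightarrow> (\<Sum>k\<in>{k. n k \<le> N}. real (n k) * norm (a k)) \<le> C / \<mu> (1 - 1 / real N)"
    then obtain C where C: "\<forall>N::nat. N \<ge> 1 \<longrightarrow> (\<Sum>k\<in>{k. n k \<le> N}. real (n k) * norm (a k)) \<le> C / \<mu> (1 - 1 / real N)"
      by blast
    define p where "p = (\<lambda>k. real (n k) * norm (a k))"
    have pn: "norm (of_nat (n k) * a k * complex_of_real r ^ (n k - 1)) = p k * r ^ (n k - 1)" if "r \<ge> 0" for k r
      using that by (simp add: p_def norm_mult norm_power)
    have summ: "summable (\<lambda>k. p k * r ^ (n k - 1))" if r: "0 \<le> r" "r < 1" for r
    proof -
      have "norm (complex_of_real r) < 1" using r by simp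
      then have s: "summable (\<lambda>k. norm (of_nat (n k) * a k * complex_of_real r ^ (n k - 1)))" by (rule gnorm)
      have eqf: "(\<lambda>k. norm (of_nat (n k) * a k * complex_of_real r ^ (n k - 1))) = (\<lambda>k. p k * r ^ (n k - 1))"
        using pn[OF r(1)] by (intro ext) (simp only:)
      show ?thesis using s unfolding eqf .
    qed
    have p0: "\<And>k. p k \<ge> 0" by (simp add: p_def)
    have Cp: "\<forall>N::nat. N \<ge> 1 \<longrightarrow> (\<Sum>k\<in>{k. n k \<le> N}. p k) \<le> C / \<mu> (1 - 1 / real N)"
      using C unfolding p_def .
    obtain K where K: "\<forall>r. 1 / 2 \<le> r \<and> r < 1 \<longrightarrow> (\<Sum>k. p k * r ^ (n k - 1)) \<le> K / \<mu> r"
      using bound_if[where n=n and lam=lam and p=p and C=C, OF mu_pos mu_decr B_pos mu_doubling pos lam_gt1 gapk p0 Cp summ]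
      by blast
    define T where "T = (\<lambda>r. \<Sum>k. p k * r ^ (n k - 1))"
    have F1T: "norm (F1 z) \<le> T (norm z)" if z: "norm z < 1" for z
    proof -
      have "norm (F1 z) = norm (\<Sum>k. of_nat (n k) * a k * z ^ (n k - 1))" using sums_unique[OF gsum[OF z]] by simp
      also have "\<dots> \<le> (\<Sum>k. norm (of_nat (n k) * a k * z ^ (n k - 1)))" by (rule summable_norm[OF gnorm[OF z]])
      also have "\<dots> = T (norm z)" unfolding T_def by (simp add: p_def norm_mult norm_power)
      finally show ?thesis .
    qed
    have mu_h: "\<mu> (1 / 2) > 0" using mu_pos by simp
    have Th: "T (1 / 2) \<le> K / \<mu> (1 / 2)" using K by (simp add: T_def)
    have T0: "T r \<ge> 0" if "r \<ge> 0" "r < 1" for r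
      unfolding T_def using that by (intro suminf_nonneg summ) (auto simp: p_def)
    have K0: "K \<ge> 0"
    proof -
      have "0 \<le> K / \<mu> (1 / 2)" using Th T0[of "1/2"] by simp
      then show ?thesis using mu_h by (simp add: zero_le_divide_iff)
    qed
    define M where "M = max K (\<mu> 0 * (K / \<mu> (1 / 2)))"
    have "\<forall>z. norm z < 1 \<longrightarrow> \<mu> (norm z) * norm (F1 z) \<le> M"
    proof (intro allI impI)
      fix z :: complex assume z: "norm z < 1"
      have mz: "\<mu> (norm z) > 0" using mu_pos z by simp
      show "\<mu> (norm z) * norm (F1 z) \<le> M"
      proof (cases "norm z \<ge> 1 / 2")
        case True
        have "\<mu> (norm z) * norm (F1 z) \<le> \<mu> (norm z) * T (norm z)" using F1T[OF z] mz by simp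
        also have "\<dots> \<le> \<mu> (norm z) * (K / \<mu> (norm z))"
        proof -
          have "T (norm z) \<le> K / \<mu> (norm z)" using K True z unfolding T_def by blast
          then show ?thesis using mz by (intro mult_left_mono) auto
        qed
        also have "\<dots> = K" using mz by simp
        finally show ?thesis unfolding M_def by simp
      next
        case False
        have s1: "summable (\<lambda>k. p k * norm z ^ (n k - 1))" using summ[of "norm z"] z by simp
        have s2: "summable (\<lambda>k. p k * (1 / 2) ^ (n k - 1))" using summ[of "1/2"] by simp
        have "T (norm z) \<le> T (1 / 2)"
          unfolding T_def
        proof (rule suminf_le)
          fix k show "p k * norm z ^ (n k - 1) \<le> p k * (1 / 2) ^ (n k - 1)"
            using False by (intro mult_left_mono power_mono) (auto simp: p_def)
        qed (rule s1, rule s2)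
        have m0: "\<mu> (norm z) \<le> \<mu> 0" using monotone_onD[OF mu_decr, of 0 "norm z"] z by simp
        have "\<mu> (norm z) * norm (F1 z) \<le> \<mu> (norm z) * T (1 / 2)"
          using F1T[OF z] \<open>T (norm z) \<le> T (1 / 2)\<close> mz by simp
        also have "\<dots> \<le> \<mu> 0 * (K / \<mu> (1 / 2))"
          using m0 Th T0[of "1/2"] mz by (intro mult_mono) auto
        finally show ?thesis unfolding M_def by simp
      qed
    qed
    then show "bloch_type \<mu> u" using bloch_iff by blast
  qed
qed

end
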